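(* Let $f_0$ be a positive integer. There exists a toric line arrangement in $\mathbb{T}^2$ consisting of exactly $3$ lines with $f_0$ vertices and $f_2=2f_0$ chambers if and only if $f_0$ is odd.
   Context: Let $\mathbb{T}^2=\mathbb{R}^2/\mathbb{Z}^2$ with quotient map $\pi:\mathbb{R}^2\to\mathbb{T}^2$. A toric line is the image $\pi(L)$ of a line $L=\{(x,y)\in\mathbb{R}^2: ax+by=c\}$ with $a,b\in\mathbb{Z}$ coprime and $c\in\mathbb{R}$; it is said to be of type $(a,b)$. A toric line arrangement is a finite set $\mathcal{A}=\{l_1,\dots,l_n\}$ of distinct toric lines which is essential, i.e. not all of its lines are of the same type (not all lines are parallel). The vertices of $\mathcal{A}$ are the points of $\mathbb{T}^2$ lying on at least two lines of $\mathcal{A}$; the chambers are the connected components of $\mathbb{T}^2\setminus\bigcup_i l_i$. We write $f_0$ and $f_2$ for the numbers of vertices and chambers. *)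

theory Defs
  imports "HOL-Analysis.Analysis"
begin

text \<open>The torus R^2/Z^2 is realised as the image of the covering map
  (x,y) maps to (exp(2 pi i x), exp(2 pi i y)) in C x C; this image with the subspace
  topology is homeomorphic to the quotient R^2/Z^2.\<close>

definition torus_map :: "real \<times> real \<Rightarrow> complex \<times> complex" where
  "torus_map = (\<lambda>(x, y). (cis (2 * pi * x), cis (2 * pi * y)))"

definition torus :: "(complex \<times> complex) set" where
  "torus = range torus_map"

definition toric_line_of_type :: "(complex \<times> complex) set \<Rightarrow> int \<Rightarrow> int \<Rightarrow> bool" where
  "toric_line_of_type l a b \<longleftrightarrow> coprime a b \<and>
     (\<exists>c::real. l = torus_map ` {(x, y). real_of_int a * x + real_of_int b * y = c})"

definition toric_line :: "(complex \<times> complex) set \<Rightarrow> bool" where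
  "toric_line l \<longleftrightarrow> (\<exists>a b. toric_line_of_type l a b)"

definition toric_arrangement :: "(complex \<times> complex) set set \<Rightarrow> bool" where
  "toric_arrangement A \<longleftrightarrow> finite A \<and> (\<forall>l\<in>A. toric_line l) \<and>
     \<not> (\<exists>a b. \<forall>l\<in>A. toric_line_of_type l a b)"

definition arr_vertices :: "(complex \<times> complex) set set \<Rightarrow> (complex \<times> complex) set" where
  "arr_vertices A = {p \<in> torus. 2 \<le> card {l \<in> A. p \<in> l}}"

definition arr_chambers :: "(complex \<times> complex) set set \<Rightarrow> (complex \<times> complex) set set" where
  "arr_chambers A = components (torus - \<Union>A)"

end

theory Submission
  imports Defs
begin
lemma cis_one_iff: "cis x = 1 \<longleftrightarrow> (\<exists>n::int. x = of_int n * (2*pi))"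
proof
  assume "cis x = 1"
  then have "cos x = 1" by (metis cis.sel(1) one_complex.sel(1))
  then show "\<exists>n::int. x = of_int n * (2*pi)" using cos_one_2pi_int by (auto simp: mult.assoc)
next
  assume "\<exists>n::int. x = of_int n * (2*pi)"
  then obtain n::int where "x = of_int n * (2*pi)" by blast
  then have "x = 2 * pi * of_int n" by simp
  then show "cis x = 1" by (simp add: cis_multiple_2pi)
qed
lemma cis_eq_iff_int: "cis a = cis b \<longleftrightarrow> (\<exists>n::int. a = b + 2 * pi * of_int n)"
proof -
  have "cis a = cis b \<longleftrightarrow> cis (a - b) = 1"
    by (metis cis_divide cis_neq_zero divide_self nonzero_divide_eq_eq mult_1)
  also have "\<dots> \<longleftrightarrow> (\<exists>n::int. a - b = of_int n * (2*pi))" by (rule cis_one_iff)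
  finally show ?thesis by (auto simp: algebra_simps)
qed
lemma cis2pi_eq: "cis (2*pi*x) = cis (2*pi*y) \<longleftrightarrow> x - y \<in> \<int>"
proof
  assume "cis (2*pi*x) = cis (2*pi*y)"
  then obtain n::int where "2*pi*x = 2*pi*y + 2*pi* of_int n" using cis_eq_iff_int by blast
  then have "2*pi*x = 2*pi*(y + of_int n)" by (simp add: algebra_simps)
  then have "x = y + of_int n" by simp
  then show "x - y \<in> \<int>" by simp
next
  assume "x - y \<in> \<int>"
  then obtain n::int where "x - y = of_int n" by (auto elim: Ints_cases)
  then have "2*pi*x = 2*pi*y + 2*pi* of_int n" by (simp add: algebra_simps)
  then show "cis (2*pi*x) = cis (2*pi*y)" using cis_eq_iff_int by blast
qed

lemma TM_eq: "torus_map p = torus_map q \<longleftrightarrow> fst p - fst q \<in> \<int> \<and> snd p - snd q \<in> \<int>"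
  by (cases p; cases q) (simp add: torus_map_def cis2pi_eq)

lemma TM_cont: "continuous_on S torus_map"
  unfolding torus_map_def case_prod_unfold
  by (intro continuous_intros)

definition lf :: "int \<Rightarrow> int \<Rightarrow> real \<Rightarrow> real \<times> real \<Rightarrow> real" where
  "lf a b c p = of_int a * fst p + of_int b * snd p - c"

definition tl :: "int \<Rightarrow> int \<Rightarrow> real \<Rightarrow> (complex \<times> complex) set" where
  "tl a b c = torus_map ` {(x, y). real_of_int a * x + real_of_int b * y = c}"

lemma mem_tl:
  assumes "coprime a b"
  shows "torus_map p \<in> tl a b c \<longleftrightarrow> lf a b c p \<in> \<int>"
proof
  assume "torus_map p \<in> tl a b c"
  then obtain q where q: "of_int a * fst q + of_int b * snd q = c" "torus_map p = torus_map q"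
    by (auto simp: tl_def)
  then obtain m n where "fst p - fst q = of_int m" "snd p - snd q = of_int n"
    using TM_eq by (metis Ints_cases)
  then have "lf a b c p = of_int (a*m + b*n)"
    using q(1) by (simp add: lf_def algebra_simps)
  then show "lf a b c p \<in> \<int>" by simp
next
  assume "lf a b c p \<in> \<int>"
  then obtain m where m: "lf a b c p = of_int m" by (auto elim: Ints_cases)
  obtain e f where ef: "e * a + f * b = 1" using bezout_int[of a b] assms by auto
  define q where "q = (fst p - of_int (m*e), snd p - of_int (m*f))"
  have "of_int a * fst q + of_int b * snd q = c"
  proof -
    have "of_int a * fst q + of_int b * snd q = lf a b c p + c - of_int (m * (e*a + f*b))"
      by (simp add: q_def lf_def algebra_simps)
    then show ?thesis using m ef by simp
  qed
  moreover have "torus_map p = torus_map q" by (simp add: TM_eq q_def)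
  ultimately show "torus_map p \<in> tl a b c" unfolding tl_def by (cases q) auto
qed


lemma lf_add: "lf a b c (p + q) = lf a b c p + of_int a * fst q + of_int b * snd q"
  by (simp add: lf_def algebra_simps)

lemma lf_comb: "lf a b c ((1 - t) *\<^sub>R p + t *\<^sub>R q) = (1 - t) * lf a b c p + t * lf a b c q"
  by (simp add: lf_def algebra_simps)

lemma lf_cont: "continuous_on S (lf a b c)"
  unfolding lf_def by (intro continuous_intros)

lemma TM_shift: "torus_map (p + (of_int m, of_int n)) = torus_map p"
  by (simp add: TM_eq)

lemma torus_S: "torus = torus_map ` UNIV" by (simp add: torus_def)

lemma comp_card_le:
  assumes "finite K" "\<And>k. k \<in> K \<Longrightarrow> connected k" "\<Union>K = S"
  shows "finite (components S) \<and> card (components S) \<le> card K"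
proof -
  define F where "F k = connected_component_set S (SOME x. x \<in> k)" for k
  have "components S \<subseteq> F ` {k\<in>K. k \<noteq> {}}"
  proof
    fix C assume "C \<in> components S"
    then obtain x where x: "x \<in> S" "C = connected_component_set S x" by (auto simp: components_def)
    then obtain k where k: "k \<in> K" "x \<in> k" using assms(3) by blast
    define y where "y = (SOME x. x \<in> k)"
    have y: "y \<in> k" using k(2) unfolding y_def by (metis someI)
    have ksub: "k \<subseteq> S" using k(1) assms(3) by blast
    have "connected_component S x y"
      by (rule connected_componentI[OF assms(2)[OF k(1)] ksub k(2) y])
    then have "connected_component_set S y = connected_component_set S x"
      by (intro connected_component_eq) simp
    then have "C = F k" using x(2) by (simp add: F_def y_def)
    then show "C \<in> F ` {k\<in>K. k \<noteq> {}}" using k by blast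
  qed
  moreover have "finite (F ` {k\<in>K. k \<noteq> {}})" using assms(1) by simp
  moreover have "card (F ` {k\<in>K. k \<noteq> {}}) \<le> card K"
  proof -
    have "card (F ` {k\<in>K. k \<noteq> {}}) \<le> card {k\<in>K. k \<noteq> {}}"
      using assms(1) by (intro card_image_le) simp
    also have "\<dots> \<le> card K" using assms(1) by (intro card_mono) auto
    finally show ?thesis .
  qed
  ultimately show ?thesis using card_mono finite_subset order_trans by metis
qed

lemma card_image_factor:
  assumes "finite (t ` X)" "\<And>x y. x \<in> X \<Longrightarrow> y \<in> X \<Longrightarrow> t x = t y \<Longrightarrow> F x = F y"
  shows "finite (F ` X) \<and> card (F ` X) \<le> card (t ` X)"
proof -
  have "F ` X = (\<lambda>u. F (inv_into X t u)) ` (t ` X)"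
  proof (intro set_eqI iffI)
    fix v assume "v \<in> F ` X"
    then obtain x where x: "x \<in> X" "v = F x" by blast
    have "inv_into X t (t x) \<in> X" "t (inv_into X t (t x)) = t x"
      using x(1) by (auto intro: inv_into_into f_inv_into_f)
    then have "F (inv_into X t (t x)) = F x" using assms(2) x(1) by blast
    then show "v \<in> (\<lambda>u. F (inv_into X t u)) ` (t ` X)" using x by force
  next
    fix v assume "v \<in> (\<lambda>u. F (inv_into X t u)) ` (t ` X)"
    then show "v \<in> F ` X" by (auto intro: inv_into_into)
  qed
  then show ?thesis using assms(1) by (metis card_image_le finite_imageI)
qed

locale three =
  fixes a1 b1 a2 b2 a3 b3 :: int and c1 c2 c3 :: real
  assumes cop1: "coprime a1 b1" and cop2: "coprime a2 b2" and cop3: "coprime a3 b3"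
    and Dnz: "a1 * b2 - a2 * b1 \<noteq> 0"
begin

abbreviation "l1 \<equiv> lf a1 b1 c1"
abbreviation "l2 \<equiv> lf a2 b2 c2"
abbreviation "l3 \<equiv> lf a3 b3 c3"
abbreviation "D \<equiv> a1 * b2 - a2 * b1"

definition "G = {p. l1 p \<notin> \<int> \<and> l2 p \<notin> \<int> \<and> l3 p \<notin> \<int>}"

definition Cell :: "int \<times> int \<times> int \<Rightarrow> (real \<times> real) set" where
  "Cell j = {p. of_int (fst j) < l1 p \<and> l1 p < of_int (fst j) + 1 \<and>
                of_int (fst (snd j)) < l2 p \<and> l2 p < of_int (fst (snd j)) + 1 \<and>
                of_int (snd (snd j)) < l3 p \<and> l3 p < of_int (snd (snd j)) + 1}"

definition Par :: "int \<Rightarrow> int \<Rightarrow> (real \<times> real) set" where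
  "Par i1 i2 = {p. of_int i1 < l1 p \<and> l1 p < of_int i1 + 1 \<and> of_int i2 < l2 p \<and> l2 p < of_int i2 + 1}"

definition J :: "real \<times> real \<Rightarrow> int \<times> int \<times> int" where
  "J p = (\<lfloor>l1 p\<rfloor>, \<lfloor>l2 p\<rfloor>, \<lfloor>l3 p\<rfloor>)"

definition "NE = J ` G"

definition sh :: "int \<times> int \<Rightarrow> int \<times> int \<times> int \<Rightarrow> int \<times> int \<times> int" where
  "sh z j = (fst j + a1 * fst z + b1 * snd z, fst (snd j) + a2 * fst z + b2 * snd z,
             snd (snd j) + a3 * fst z + b3 * snd z)"

definition zv :: "int \<times> int \<Rightarrow> real \<times> real" where "zv z = (of_int (fst z), of_int (snd z))"

lemma floor_in: "x \<notin> \<int> \<Longrightarrow> of_int \<lfloor>x\<rfloor> < x \<and> x < of_int \<lfloor>x\<rfloor> + 1"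
proof -
  assume x: "x \<notin> \<int>"
  have "of_int \<lfloor>x\<rfloor> \<noteq> x" using x by (metis Ints_of_int)
  then show ?thesis using of_int_floor_le[of x] floor_correct[of x] by linarith
qed

lemma G_cell: "p \<in> G \<Longrightarrow> p \<in> Cell (J p)"
  by (simp add: G_def Cell_def J_def floor_in)

lemma Cell_G: "Cell j \<subseteq> G"
proof
  fix p assume p: "p \<in> Cell j"
  have h: "x \<notin> \<int>" if "of_int k < x" "x < of_int k + 1" for x :: real and k :: int
  proof
    assume "x \<in> \<int>" then obtain m where "x = of_int m" by (auto elim: Ints_cases)
    with that show False by simp
  qed
  show "p \<in> G" using p h by (auto simp: Cell_def G_def)
qed

lemma Cell_convex: "convex (Cell j)"
  unfolding convex_alt
proof (intro ballI allI impI)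
  fix x y and u :: real assume xy: "x \<in> Cell j" "y \<in> Cell j" and u: "0 \<le> u \<and> u \<le> 1"
  have h: "A < (1 - u) * s + u * t" "(1 - u) * s + u * t < B" if "A < s" "s < B" "A < t" "t < B" for A B s t :: real
  proof -
    have e1: "(1 - u) * s + u * t - A = (1 - u) * (s - A) + u * (t - A)" by algebra
    have e2: "B - ((1 - u) * s + u * t) = (1 - u) * (B - s) + u * (B - t)" by algebra
    show "A < (1 - u) * s + u * t"
    proof (cases "u = 0")
      case True then show ?thesis using that by simp
    next
      case False
      then have "0 < u * (t - A)" using u that by simp
      moreover have "0 \<le> (1 - u) * (s - A)" using u that by simp
      ultimately show ?thesis using e1 by linarith
    qed
    show "(1 - u) * s + u * t < B"
    proof (cases "u = 0")
      case True then show ?thesis using that by simp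
    next
      case False
      then have "0 < u * (B - t)" using u that by simp
      moreover have "0 \<le> (1 - u) * (B - s)" using u that by simp
      ultimately show ?thesis using e2 by linarith
    qed
  qed
  show "(1 - u) *\<^sub>R x + u *\<^sub>R y \<in> Cell j"
    using xy by (simp add: Cell_def lf_comb) (blast intro: h)
qed

lemma Cell_shift: "Cell (sh z j) = (\<lambda>p. p + zv z) ` Cell j"
proof (intro set_eqI iffI)
  fix p assume "p \<in> Cell (sh z j)"
  then have "p - zv z \<in> Cell j"
    by (simp add: Cell_def sh_def zv_def lf_def algebra_simps)
  then show "p \<in> (\<lambda>p. p + zv z) ` Cell j" by (metis (no_types, lifting) diff_add_cancel image_eqI)
next
  fix p assume "p \<in> (\<lambda>p. p + zv z) ` Cell j"
  then obtain q where "q \<in> Cell j" "p = q + zv z" by blast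
  then show "p \<in> Cell (sh z j)"
    by (simp add: Cell_def sh_def zv_def lf_def algebra_simps)
qed

lemma TM_zv: "torus_map (p + zv z) = torus_map p"
  by (simp add: zv_def TM_shift)

lemma img_shift: "torus_map ` Cell (sh z j) = torus_map ` Cell j"
  by (simp add: Cell_shift image_image TM_zv)


definition corner :: "int \<Rightarrow> int \<Rightarrow> real \<times> real" where
  "corner i1 i2 = (((of_int i1 + c1) * of_int b2 - of_int b1 * (of_int i2 + c2)) / of_int D,
                   (of_int a1 * (of_int i2 + c2) - of_int a2 * (of_int i1 + c1)) / of_int D)"

lemma corner: "l1 (corner i1 i2) = of_int i1" "l2 (corner i1 i2) = of_int i2"
proof -
  have d0: "real_of_int D \<noteq> 0" using Dnz of_int_eq_0_iff by blast
  then have d: "real_of_int a1 * real_of_int b2 - real_of_int a2 * real_of_int b1 \<noteq> 0" by simp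
  have lin: "a * (X / Dr) + b * (Y / Dr) = V" if "Dr \<noteq> 0" "a * X + b * Y = V * Dr" for a b X Y V Dr :: real
    using that by (simp add: field_simps)
  let ?Dr = "real_of_int a1 * real_of_int b2 - real_of_int a2 * real_of_int b1"
  have "of_int a1 * (((of_int i1 + c1) * of_int b2 - of_int b1 * (of_int i2 + c2)) / ?Dr) +
        of_int b1 * ((of_int a1 * (of_int i2 + c2) - of_int a2 * (of_int i1 + c1)) / ?Dr) = of_int i1 + c1"
    by (rule lin[OF d]) algebra
  then show "l1 (corner i1 i2) = of_int i1" by (simp add: corner_def lf_def)
  have "of_int a2 * (((of_int i1 + c1) * of_int b2 - of_int b1 * (of_int i2 + c2)) / ?Dr) +
        of_int b2 * ((of_int a1 * (of_int i2 + c2) - of_int a2 * (of_int i1 + c1)) / ?Dr) = of_int i2 + c2"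
    by (rule lin[OF d]) algebra
  then show "l2 (corner i1 i2) = of_int i2" by (simp add: corner_def lf_def)
qed

definition "low j \<longleftrightarrow> (\<forall>q\<in>Par (fst j) (fst (snd j)). of_int (snd (snd j)) \<le> l3 q)"

definition Seg :: "int \<times> int \<times> int \<Rightarrow> (real \<times> real) set" where
  "Seg j = {p. of_int (fst j) \<le> l1 p \<and> l1 p \<le> of_int (fst j) + 1 \<and>
                of_int (fst (snd j)) \<le> l2 p \<and> l2 p \<le> of_int (fst (snd j)) + 1 \<and>
                l3 p = of_int (snd (snd j))}"

definition gf :: "real \<times> real \<Rightarrow> real" where "gf p = - of_int b3 * fst p + of_int a3 * snd p"
definition dv :: "real \<times> real" where "dv = (- of_int b3, of_int a3)"

definition "ismax j w \<longleftrightarrow> w \<in> Seg j \<and> (\<forall>v\<in>Seg j. gf v \<le> gf w)"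
definition "ex j = (SOME w. ismax j w)"

definition tag :: "int \<times> int \<times> int \<Rightarrow> bool \<times> complex \<times> complex" where
  "tag j = (if low j then (False, torus_map (corner (fst j) (fst (snd j)))) else (True, torus_map (ex j)))"

lemma N3: "0 < (of_int a3)^2 + (of_int b3 :: real)^2"
proof -
  have "\<not> (a3 = 0 \<and> b3 = 0)" using cop3 by auto
  then show ?thesis by (auto simp: sum_power2_gt_zero_iff)
qed

lemma Cell_Par: "Cell j \<subseteq> Par (fst j) (fst (snd j))"
  by (auto simp: Cell_def Par_def)

lemma NE_nonempty: "j \<in> NE \<Longrightarrow> \<exists>q. q \<in> Cell j"
  unfolding NE_def using G_cell by blast

lemma ex_mid:
  assumes "j \<in> NE" "\<not> low j"
  shows "\<exists>m. m \<in> Par (fst j) (fst (snd j)) \<and> l3 m = of_int (snd (snd j))"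
proof -
  obtain q1 where q1: "q1 \<in> Par (fst j) (fst (snd j))" "l3 q1 < of_int (snd (snd j))"
    using assms(2) unfolding low_def by force
  obtain q2 where q2: "q2 \<in> Cell j" using NE_nonempty assms(1) by blast
  have q2': "q2 \<in> Par (fst j) (fst (snd j))" "of_int (snd (snd j)) < l3 q2"
    using subsetD[OF Cell_Par q2] q2 by (auto simp: Cell_def)
  define t where "t = (of_int (snd (snd j)) - l3 q1) / (l3 q2 - l3 q1)"
  have t: "0 < t" "t < 1" using q1(2) q2'(2) by (auto simp: t_def field_simps)
  define m where "m = (1 - t) *\<^sub>R q1 + t *\<^sub>R q2"
  have "l3 m = (1 - t) * l3 q1 + t * l3 q2" by (simp add: m_def lf_comb)
  also have "\<dots> = l3 q1 + t * (l3 q2 - l3 q1)" by algebra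
  also have "t * (l3 q2 - l3 q1) = of_int (snd (snd j)) - l3 q1"
    using q1(2) q2'(2) by (simp add: t_def)
  finally have "l3 m = of_int (snd (snd j))" by simp
  moreover have "m \<in> Par (fst j) (fst (snd j))"
  proof -
    have h: "A < (1 - t) * s + t * u" "(1 - t) * s + t * u < B" if "A < s" "s < B" "A < u" "u < B" for A B s u :: real
    proof -
      have e1: "(1 - t) * s + t * u - A = (1 - t) * (s - A) + t * (u - A)" by algebra
      have e2: "B - ((1 - t) * s + t * u) = (1 - t) * (B - s) + t * (B - u)" by algebra
      have f: "0 < t * (u - A)" "0 \<le> (1 - t) * (s - A)" "0 < t * (B - u)" "0 \<le> (1 - t) * (B - s)"
        using t that by auto
      show "A < (1 - t) * s + t * u" using e1 f(1,2) by linarith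
      show "(1 - t) * s + t * u < B" using e2 f(3,4) by linarith
    qed
    show ?thesis using q1(1) q2'(1) unfolding m_def Par_def by (simp add: lf_comb) (blast intro: h)
  qed
  ultimately show ?thesis by blast
qed


lemma between_notint: "of_int k < x \<Longrightarrow> x < of_int k + 1 \<Longrightarrow> (x::real) \<notin> \<int>"
proof
  assume "of_int k < x" "x < of_int k + 1" "x \<in> \<int>"
  then obtain m where "x = of_int m" "of_int k < x" "x < of_int k + 1" by (auto elim: Ints_cases)
  then show False by simp
qed

lemma bound_helper:
  fixes Dr x u v be ga R1 R2 :: real
  assumes "1 \<le> \<bar>Dr\<bar>" "Dr * x = be * u - ga * v" "\<bar>u\<bar> \<le> R1" "\<bar>v\<bar> \<le> R2"
  shows "\<bar>x\<bar> \<le> \<bar>be\<bar> * R1 + \<bar>ga\<bar> * R2"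
proof -
  have "\<bar>x\<bar> \<le> \<bar>Dr\<bar> * \<bar>x\<bar>" using assms(1) by (simp add: mult_right_mono[of 1 "\<bar>Dr\<bar>" "\<bar>x\<bar>", simplified])
  also have "\<dots> = \<bar>be * u - ga * v\<bar>" using assms(2) by (metis abs_mult)
  also have "\<dots> \<le> \<bar>be\<bar> * \<bar>u\<bar> + \<bar>ga\<bar> * \<bar>v\<bar>" by (metis abs_mult abs_triangle_ineq4)
  also have "\<dots> \<le> \<bar>be\<bar> * R1 + \<bar>ga\<bar> * R2" using assms(3,4) by (intro add_mono mult_left_mono) auto
  finally show ?thesis .
qed

lemma Seg_compact: "compact (Seg j)"
proof -
  have cl: "closed (Seg j)" unfolding Seg_def
    by (intro closed_Collect_conj closed_Collect_le closed_Collect_eq lf_cont continuous_on_const)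
  define R1 where "R1 = \<bar>of_int (fst j)\<bar> + 1 + \<bar>c1\<bar>"
  define R2 where "R2 = \<bar>of_int (fst (snd j))\<bar> + 1 + \<bar>c2\<bar>"
  define B where "B = \<bar>of_int b2\<bar> * R1 + \<bar>of_int b1\<bar> * R2 + (\<bar>of_int a1\<bar> * R2 + \<bar>of_int a2\<bar> * R1)"
  have D1: "1 \<le> \<bar>real_of_int D\<bar>" using Dnz by linarith
  have "Seg j \<subseteq> {-B..B} \<times> {-B..B}"
  proof
    fix p assume p: "p \<in> Seg j"
    obtain x y where pxy: "p = (x, y)" by (cases p)
    have u: "\<bar>of_int a1 * x + of_int b1 * y\<bar> \<le> R1"
      using p by (auto simp: Seg_def R1_def lf_def pxy)
    have v: "\<bar>of_int a2 * x + of_int b2 * y\<bar> \<le> R2"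
      using p by (auto simp: Seg_def R2_def lf_def pxy)
    have "\<bar>x\<bar> \<le> \<bar>of_int b2\<bar> * R1 + \<bar>of_int b1\<bar> * R2"
      by (rule bound_helper[OF D1 _ u v]) (simp add: algebra_simps)
    moreover have "\<bar>y\<bar> \<le> \<bar>of_int (- a2)\<bar> * R1 + \<bar>of_int (- a1)\<bar> * R2"
      by (rule bound_helper[OF D1 _ u v]) (simp add: algebra_simps)
    moreover have "0 \<le> \<bar>of_int b2\<bar> * R1 + \<bar>of_int b1\<bar> * R2" "0 \<le> \<bar>of_int a1\<bar> * R2 + \<bar>of_int a2\<bar> * R1"
      by (simp_all add: R1_def R2_def)
    ultimately show "p \<in> {-B..B} \<times> {-B..B}" unfolding pxy B_def abs_le_iff by simp
  qed
  then have "bounded (Seg j)" using bounded_subset[OF bounded_Times[OF bounded_closed_interval bounded_closed_interval]] by blast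
  then show ?thesis using cl by (simp add: compact_eq_bounded_closed)
qed

lemma ismax_ex:
  assumes "j \<in> NE" "\<not> low j"
  shows "ismax j (ex j)"
proof -
  obtain m where m: "m \<in> Par (fst j) (fst (snd j))" "l3 m = of_int (snd (snd j))"
    using ex_mid[OF assms] by blast
  then have "m \<in> Seg j" by (auto simp: Par_def Seg_def)
  then have "Seg j \<noteq> {}" by blast
  moreover have "continuous_on (Seg j) gf" unfolding gf_def by (intro continuous_intros)
  ultimately obtain w where "w \<in> Seg j" "\<forall>v\<in>Seg j. gf v \<le> gf w"
    using continuous_attains_sup[OF Seg_compact] by blast
  then have "ismax j w" by (simp add: ismax_def)
  then show ?thesis unfolding ex_def by (rule someI)
qed


lemma lf_move: "lf a b c (p + e *\<^sub>R dv) = lf a b c p + e * (of_int b * of_int a3 - of_int a * of_int b3)"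
  by (simp add: lf_add dv_def algebra_simps)

lemma l3_move: "l3 (p + e *\<^sub>R dv) = l3 p"
  by (simp add: lf_move)

lemma gf_move: "gf (p + e *\<^sub>R dv) = gf p + e * ((of_int a3)^2 + (of_int b3)^2)"
  by (simp add: gf_def dv_def algebra_simps power2_eq_square)

lemma ismax_bd:
  assumes "ismax j w"
  shows "l1 w \<in> \<int> \<or> l2 w \<in> \<int>"
proof (rule ccontr)
  assume nz: "\<not> (l1 w \<in> \<int> \<or> l2 w \<in> \<int>)"
  define A1 where "A1 = real_of_int (fst j)"
  define A2 where "A2 = real_of_int (fst (snd j))"
  have ws: "w \<in> Seg j" and wm: "\<forall>v\<in>Seg j. gf v \<le> gf w" using assms by (auto simp: ismax_def)
  have i: "real_of_int k + 1 \<in> \<int>" for k by (metis Ints_1 Ints_add Ints_of_int)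
  have "A1 \<noteq> l1 w" "A1 + 1 \<noteq> l1 w" "A2 \<noteq> l2 w" "A2 + 1 \<noteq> l2 w" 
    using nz i[of "fst j"] i[of "fst (snd j)"] Ints_of_int unfolding A1_def A2_def by metis+
  then have st: "A1 < l1 w" "l1 w < A1 + 1" "A2 < l2 w" "l2 w < A2 + 1"
    using ws by (auto simp: Seg_def A1_def A2_def)
  define d1 where "d1 = of_int b1 * of_int a3 - of_int a1 * (of_int b3 :: real)"
  define d2 where "d2 = of_int b2 * of_int a3 - of_int a2 * (of_int b3 :: real)"
  define r where "r = min (min (l1 w - A1) (A1 + 1 - l1 w)) (min (l2 w - A2) (A2 + 1 - l2 w))"
  have r: "0 < r" using st by (simp add: r_def)
  define e where "e = r / (\<bar>d1\<bar> + \<bar>d2\<bar> + 1)"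
  have e: "0 < e" using r by (simp add: e_def add_pos_nonneg)
  have pos: "0 < \<bar>d1\<bar> + \<bar>d2\<bar> + 1" using abs_ge_zero[of d1] abs_ge_zero[of d2] by linarith
  have er: "e * (\<bar>d1\<bar> + \<bar>d2\<bar> + 1) = r" unfolding e_def using pos by simp
  have e1: "\<bar>e * d1\<bar> < r" "\<bar>e * d2\<bar> < r"
  proof -
    have "\<bar>e * d1\<bar> = e * \<bar>d1\<bar>" "\<bar>e * d2\<bar> = e * \<bar>d2\<bar>" using e by (auto simp: abs_mult)
    moreover have "e * \<bar>d1\<bar> + e * \<bar>d2\<bar> + e = r" using er by (simp add: algebra_simps)
    moreover have "0 \<le> e * \<bar>d1\<bar>" "0 \<le> e * \<bar>d2\<bar>" using e by auto
    ultimately show "\<bar>e * d1\<bar> < r" "\<bar>e * d2\<bar> < r" using e by linarith+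
  qed
  define w' where "w' = w + e *\<^sub>R dv"
  have "l1 w' = l1 w + e * d1" "l2 w' = l2 w + e * d2" "l3 w' = l3 w"
    by (simp_all add: w'_def lf_move d1_def d2_def)
  then have "w' \<in> Seg j" using ws st e1 r_def
    unfolding Seg_def A1_def[symmetric] A2_def[symmetric] abs_less_iff by auto
  moreover have "gf w' > gf w" using e N3 by (simp add: w'_def gf_move)
  ultimately show False using wm by force
qed

lemma comb_strict:
  fixes A B s t th :: real
  assumes "0 < th" "th \<le> 1" "A \<le> s" "s \<le> B" "A < t" "t < B"
  shows "A < (1 - th) * s + th * t \<and> (1 - th) * s + th * t < B"
proof -
  have e1: "(1 - th) * s + th * t - A = (1 - th) * (s - A) + th * (t - A)" by algebra
  have e2: "B - ((1 - th) * s + th * t) = (1 - th) * (B - s) + th * (B - t)" by algebra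
  have f: "0 < th * (t - A)" "0 \<le> (1 - th) * (s - A)" "0 < th * (B - t)" "0 \<le> (1 - th) * (B - s)"
    using assms by auto
  show ?thesis using e1 e2 f by linarith
qed

lemma ismax_tau:
  assumes "ismax j w" "m \<in> Par (fst j) (fst (snd j))" "l3 m = of_int (snd (snd j))"
  shows "\<exists>tau>0. \<forall>e. 0 < e \<and> e \<le> tau \<longrightarrow> w - e *\<^sub>R dv \<in> Par (fst j) (fst (snd j))"
proof -
  have ws: "w \<in> Seg j" and wm: "\<forall>v\<in>Seg j. gf v \<le> gf w" using assms by (auto simp: ismax_def)
  have ms: "m \<in> Seg j" using assms(2,3) by (auto simp: Par_def Seg_def)
  define u1 where "u1 = fst m - fst w"
  define u2 where "u2 = snd m - snd w"
  define N where "N = (of_int a3)^2 + (of_int b3 :: real)^2"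
  have N: "0 < N" using N3 by (simp add: N_def)
  have h: "of_int a3 * u1 + of_int b3 * u2 = 0"
    using assms(3) ws by (simp add: Seg_def lf_def u1_def u2_def algebra_simps)
  define t' where "t' = (- of_int b3 * u1 + of_int a3 * u2) / N"
  have tN: "t' * N = - of_int b3 * u1 + of_int a3 * u2" using N by (simp add: t'_def)
  have "t' * (- of_int b3) * N = (- of_int b3) * (t' * N)" by simp
  also have "\<dots> = u1 * N" unfolding tN unfolding N_def using h by algebra
  finally have "t' * (- of_int b3) * N = u1 * N" .
  then have c1: "t' * (- of_int b3) = u1" using N by (metis mult_right_cancel less_irrefl)
  have "t' * (of_int a3) * N = (of_int a3) * (t' * N)" by simp
  also have "\<dots> = u2 * N" unfolding tN unfolding N_def using h by algebra
  finally have "t' * (of_int a3) * N = u2 * N" .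
  then have c2: "t' * (of_int a3) = u2" using N by (metis mult_right_cancel less_irrefl)
  have mw: "m = w + t' *\<^sub>R dv" using c1 c2 by (simp add: prod_eq_iff dv_def u1_def u2_def algebra_simps)
  have "gf m = gf w + t' * N" using mw gf_move N_def by simp
  then have "t' * N \<le> 0" using wm ms by force
  then have "t' \<le> 0" using N by (auto simp: mult_le_0_iff)
  moreover have "t' \<noteq> 0"
  proof
    assume "t' = 0"
    then have "m = w" using mw by simp
    moreover have "l1 m \<notin> \<int>" "l2 m \<notin> \<int>" using assms(2) between_notint unfolding Par_def by blast+
    ultimately show False using ismax_bd[OF assms(1)] by simp
  qed
  ultimately have tp: "0 < - t'" by simp
  show ?thesis
  proof (intro exI[of _ "- t'"] conjI allI impI tp)
    fix e assume e: "0 < e \<and> e \<le> - t'"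
    define th where "th = e / (- t')"
    have th: "0 < th" "th \<le> 1"
    proof -
      show "0 < th" using e tp unfolding th_def by (simp only: divide_pos_pos)
      show "th \<le> 1" unfolding th_def by (subst pos_divide_le_eq[OF tp]) (use e in simp)
    qed
    have eq: "w - e *\<^sub>R dv = (1 - th) *\<^sub>R w + th *\<^sub>R m"
      using tp unfolding mw th_def by (simp add: prod_eq_iff dv_def field_simps)
    have P: "real_of_int (fst j) < l1 m \<and> l1 m < real_of_int (fst j) + 1 \<and>
         real_of_int (fst (snd j)) < l2 m \<and> l2 m < real_of_int (fst (snd j)) + 1"
      using assms(2) by (simp add: Par_def)
    have W: "real_of_int (fst j) \<le> l1 w \<and> l1 w \<le> real_of_int (fst j) + 1 \<and>
         real_of_int (fst (snd j)) \<le> l2 w \<and> l2 w \<le> real_of_int (fst (snd j)) + 1"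
      using ws by (simp add: Seg_def)
    show "w - e *\<^sub>R dv \<in> Par (fst j) (fst (snd j))"
      unfolding eq Par_def using comb_strict[OF th] P W by (simp add: lf_comb) meson
  qed
qed


lemma TM_eq_zv: "torus_map p = torus_map q \<Longrightarrow> \<exists>z. p = q + zv z"
proof -
  assume "torus_map p = torus_map q"
  then obtain m n where "fst p - fst q = of_int m" "snd p - snd q = of_int n"
    using TM_eq by (metis Ints_cases)
  then have "p = q + zv (m, n)" by (simp add: prod_eq_iff zv_def algebra_simps)
  then show ?thesis by blast
qed

lemma lf_zv: "lf a b c (p + zv z) = lf a b c p + of_int (a * fst z + b * snd z)"
  by (simp add: lf_add zv_def)

lemma Par_shift: "p \<in> Par i1 i2 \<Longrightarrow> p + zv z \<in> Par (i1 + (a1 * fst z + b1 * snd z)) (i2 + (a2 * fst z + b2 * snd z))"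
  by (simp add: Par_def lf_zv)

lemma int_from_int:
  fixes x :: real
  assumes "of_int i < x" "x < of_int i + 1" "of_int i' < x + of_int k" "x + of_int k < of_int i' + 1"
  shows "i' = i + k"
proof -
  have "real_of_int i' < real_of_int (i + k + 1)" "real_of_int (i + k) < real_of_int (i' + 1)"
    using assms by simp_all
  then have "i' < i + k + 1" "i + k < i' + 1" by (simp_all only: of_int_less_iff)
  then show ?thesis by simp
qed

lemma tag_inj:
  assumes jN: "j \<in> NE" and jN': "j' \<in> NE" and tg: "tag j = tag j'"
  shows "\<exists>z. j' = sh z j"
proof -
  obtain j1 j2 j3 where jj: "j = (j1, j2, j3)" by (cases j) auto
  obtain j1' j2' j3' where jj': "j' = (j1', j2', j3')" by (cases j') auto
  have lw: "low j = low j'" using tg by (auto simp: tag_def split: if_splits)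
  show ?thesis
  proof (cases "low j")
    case True
    then have lj': "low j'" using lw by simp
    have "torus_map (corner j1' j2') = torus_map (corner j1 j2)"
      using tg True lj' by (simp add: tag_def jj jj')
    then obtain z where zc: "corner j1' j2' = corner j1 j2 + zv z" using TM_eq_zv by blast
    define k1 where "k1 = a1 * fst z + b1 * snd z"
    define k2 where "k2 = a2 * fst z + b2 * snd z"
    define k3 where "k3 = a3 * fst z + b3 * snd z"
    have "real_of_int j1' = of_int j1 + of_int k1"
      using arg_cong[OF zc, of l1] by (simp add: corner lf_zv k1_def)
    then have e1: "j1' = j1 + k1" by linarith
    have "real_of_int j2' = of_int j2 + of_int k2"
      using arg_cong[OF zc, of l2] by (simp add: corner lf_zv k2_def)
    then have e2: "j2' = j2 + k2" by linarith
    obtain q where q: "q \<in> Cell j" using NE_nonempty jN by blast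
    obtain q' where q': "q' \<in> Cell j'" using NE_nonempty jN' by blast
    have "q + zv z \<in> Par j1' j2'"
      using Par_shift[OF subsetD[OF Cell_Par q], of z] by (simp add: jj e1 e2 k1_def k2_def)
    then have "of_int j3' \<le> l3 (q + zv z)" using lj' by (simp add: low_def jj')
    moreover have "l3 q < of_int j3 + 1" using q by (simp add: Cell_def jj)
    ultimately have i1: "real_of_int j3' < of_int j3 + 1 + of_int k3" by (simp add: lf_zv k3_def)
    have "q' + zv (- fst z, - snd z) \<in> Par j1 j2"
      using Par_shift[OF subsetD[OF Cell_Par q'], of "(- fst z, - snd z)"]
      by (simp add: jj' e1 e2 k1_def k2_def algebra_simps)
    then have "of_int j3 \<le> l3 (q' + zv (- fst z, - snd z))" using True by (simp add: low_def jj)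
    moreover have "l3 q' < of_int j3' + 1" using q' by (simp add: Cell_def jj')
    ultimately have i2: "real_of_int j3 < of_int j3' + 1 - of_int k3" by (simp add: lf_zv k3_def algebra_simps)
    have "j3' < j3 + 1 + k3" "j3 < j3' + 1 - k3" using i1 i2 by linarith+
    then have e3: "j3' = j3 + k3" by simp
    show ?thesis by (rule exI[of _ z]) (simp add: sh_def jj jj' e1 e2 e3 k1_def k2_def k3_def)
  next
    case False
    then have lj': "\<not> low j'" using lw by simp
    have mx: "ismax j (ex j)" using ismax_ex[OF jN False] .
    have mx': "ismax j' (ex j')" using ismax_ex[OF jN' lj'] .
    have "torus_map (ex j') = torus_map (ex j)" using tg False lj' by (simp add: tag_def)
    then obtain z where zc: "ex j' = ex j + zv z" using TM_eq_zv by blast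
    obtain m where m: "m \<in> Par (fst j) (fst (snd j))" "l3 m = of_int (snd (snd j))"
      using ex_mid[OF jN False] by blast
    obtain m' where m': "m' \<in> Par (fst j') (fst (snd j'))" "l3 m' = of_int (snd (snd j'))"
      using ex_mid[OF jN' lj'] by blast
    obtain t where t: "t > 0" "\<forall>e. 0 < e \<and> e \<le> t \<longrightarrow> ex j - e *\<^sub>R dv \<in> Par (fst j) (fst (snd j))"
      using ismax_tau[OF mx m] by blast
    obtain t' where t': "t' > 0" "\<forall>e. 0 < e \<and> e \<le> t' \<longrightarrow> ex j' - e *\<^sub>R dv \<in> Par (fst j') (fst (snd j'))"
      using ismax_tau[OF mx' m'] by blast
    define e where "e = min t t'"
    have "e > 0" "e \<le> t" "e \<le> t'" using t t' by (auto simp: e_def)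
    then have P1: "ex j - e *\<^sub>R dv \<in> Par j1 j2" and P2: "ex j - e *\<^sub>R dv + zv z \<in> Par j1' j2'"
      using t(2) t'(2) zc by (auto simp: jj jj' algebra_simps)
    define p where "p = ex j - e *\<^sub>R dv"
    define k1 where "k1 = a1 * fst z + b1 * snd z"
    define k2 where "k2 = a2 * fst z + b2 * snd z"
    define k3 where "k3 = a3 * fst z + b3 * snd z"
    have e1: "j1' = j1 + k1"
      using P1 P2 unfolding p_def[symmetric] Par_def lf_zv k1_def[symmetric]
      by (intro int_from_int[of j1 "l1 p"]) (auto simp: lf_zv k1_def)
    have e2: "j2' = j2 + k2"
      using P1 P2 unfolding p_def[symmetric] Par_def lf_zv k2_def[symmetric]
      by (intro int_from_int[of j2 "l2 p"]) (auto simp: lf_zv k2_def)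
    have w3: "l3 (ex j) = of_int j3" "l3 (ex j') = of_int j3'"
      using mx mx' by (auto simp: ismax_def Seg_def jj jj')
    then have "real_of_int j3' = of_int j3 + of_int k3" using zc by (simp add: lf_zv k3_def)
    then have e3: "j3' = j3 + k3" by linarith
    show ?thesis by (rule exI[of _ z]) (simp add: sh_def jj jj' e1 e2 e3 k1_def k2_def k3_def)
  qed
qed


abbreviation "L1 \<equiv> tl a1 b1 c1"
abbreviation "L2 \<equiv> tl a2 b2 c2"
abbreviation "L3 \<equiv> tl a3 b3 c3"

lemma S_eq: "torus - (L1 \<union> L2 \<union> L3) = torus_map ` G"
proof (intro set_eqI iffI)
  fix x assume "x \<in> torus - (L1 \<union> L2 \<union> L3)"
  then obtain p where p: "x = torus_map p" "torus_map p \<notin> L1" "torus_map p \<notin> L2" "torus_map p \<notin> L3"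
    by (auto simp: torus_def)
  then have "p \<in> G" using mem_tl cop1 cop2 cop3 by (simp add: G_def)
  then show "x \<in> torus_map ` G" using p by blast
next
  fix x assume "x \<in> torus_map ` G"
  then obtain p where p: "x = torus_map p" "p \<in> G" by blast
  then show "x \<in> torus - (L1 \<union> L2 \<union> L3)"
    using mem_tl cop1 cop2 cop3 by (auto simp: G_def torus_def)
qed

lemma tag_range:
  assumes "j \<in> NE"
  shows "tag j \<in> ({False} \<times> (L1 \<inter> L2)) \<union> ({True} \<times> ((L1 \<inter> L3) \<union> (L2 \<inter> L3)))"
proof (cases "low j")
  case True
  have "torus_map (corner (fst j) (fst (snd j))) \<in> L1 \<inter> L2"
    using mem_tl cop1 cop2 by (simp add: corner)
  then show ?thesis using True by (simp add: tag_def)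
next
  case False
  have mx: "ismax j (ex j)" using ismax_ex[OF assms False] .
  then have "l3 (ex j) \<in> \<int>" by (auto simp: ismax_def Seg_def)
  moreover have "l1 (ex j) \<in> \<int> \<or> l2 (ex j) \<in> \<int>" using ismax_bd[OF mx] .
  ultimately have "torus_map (ex j) \<in> (L1 \<inter> L3) \<union> (L2 \<inter> L3)"
    using mem_tl cop1 cop2 cop3 by auto
  then show ?thesis using False by (simp add: tag_def)
qed

theorem chambers_le:
  assumes fin1: "finite (L1 \<inter> L2)" and fin2: "finite ((L1 \<inter> L3) \<union> (L2 \<inter> L3))"
  shows "finite (components (torus - (L1 \<union> L2 \<union> L3))) \<and>
         card (components (torus - (L1 \<union> L2 \<union> L3))) \<le> card (L1 \<inter> L2) + card ((L1 \<inter> L3) \<union> (L2 \<inter> L3))"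
proof -
  define T where "T = ({False} \<times> (L1 \<inter> L2)) \<union> ({True} \<times> ((L1 \<inter> L3) \<union> (L2 \<inter> L3)))"
  have Tfin: "finite T" using fin1 fin2 by (simp add: T_def)
  have Tcard: "card T = card (L1 \<inter> L2) + card ((L1 \<inter> L3) \<union> (L2 \<inter> L3))"
    unfolding T_def using fin1 fin2 by (subst card_Un_disjoint) (auto simp: card_cartesian_product)
  have tsub: "tag ` NE \<subseteq> T" using tag_range unfolding T_def by blast
  define F where "F j = torus_map ` Cell j" for j
  have "finite (F ` NE) \<and> card (F ` NE) \<le> card (tag ` NE)"
  proof (rule card_image_factor)
    show "finite (tag ` NE)" using Tfin tsub finite_subset by blast
    fix x y assume "x \<in> NE" "y \<in> NE" "tag x = tag y"
    then obtain z where "y = sh z x" using tag_inj by blast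
    then show "F x = F y" by (simp add: F_def img_shift)
  qed
  moreover have "card (tag ` NE) \<le> card T" using Tfin tsub card_mono by blast
  moreover have "finite (components (torus - (L1 \<union> L2 \<union> L3))) \<and>
         card (components (torus - (L1 \<union> L2 \<union> L3))) \<le> card (F ` NE)"
  proof (rule comp_card_le)
    show "finite (F ` NE)" using calculation(1) by blast
    fix k assume "k \<in> F ` NE"
    then obtain j where "k = torus_map ` Cell j" by (auto simp: F_def)
    then show "connected k"
      using connected_continuous_image[OF TM_cont convex_connected[OF Cell_convex]] by simp
  next
    show "\<Union> (F ` NE) = torus - (L1 \<union> L2 \<union> L3)"
    proof
      show "\<Union> (F ` NE) \<subseteq> torus - (L1 \<union> L2 \<union> L3)"
        unfolding S_eq F_def using Cell_G by (meson UN_least image_mono)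
      show "torus - (L1 \<union> L2 \<union> L3) \<subseteq> \<Union> (F ` NE)"
      proof
        fix x assume "x \<in> torus - (L1 \<union> L2 \<union> L3)"
        then obtain p where "p \<in> G" "x = torus_map p" using S_eq by auto
        then show "x \<in> \<Union> (F ` NE)" using G_cell unfolding F_def NE_def by blast
      qed
    qed
  qed
  ultimately show ?thesis using Tcard by linarith
qed

end

lemma invol_odd:
  assumes "finite V" "\<forall>x\<in>V. f x \<in> V \<and> f (f x) = x" "{x\<in>V. f x = x} = {x0}"
  shows "odd (card V)"
  using assms
proof (induction "card V" arbitrary: V rule: less_induct)
  case less
  have x0: "x0 \<in> V" "f x0 = x0" using less.prems(3) by auto
  show ?case
  proof (cases "V = {x0}")
    case True then show ?thesis by simp
  next
    case False
    then obtain x where x: "x \<in> V" "x \<noteq> x0" using x0 by blast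
    have fx: "f x \<in> V" "f (f x) = x" using less.prems(2) x(1) by auto
    have nfx: "f x \<noteq> x" using less.prems(3) x by blast
    have fx0: "f x \<noteq> x0" using fx(2) x0(2) x(2) by metis
    define V' where "V' = V - {x, f x}"
    have c2: "card {x, f x} = 2" using nfx by simp
    have "card {x, f x} \<le> card V" using less.prems(1) x(1) fx(1) by (intro card_mono) auto
    moreover have "card V' = card V - card {x, f x}"
      using less.prems(1) x(1) fx(1) unfolding V'_def by (intro card_Diff_subset) auto
    ultimately have cV: "card V = card V' + 2" using c2 by simp
    have "odd (card V')"
    proof (rule less.hyps)
      show "card V' < card V" using cV by simp
      show "finite V'" using less.prems(1) by (simp add: V'_def)
      show "\<forall>y\<in>V'. f y \<in> V' \<and> f (f y) = y"
      proof
        fix y assume y: "y \<in> V'"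
        then have yV: "y \<in> V" "y \<noteq> x" "y \<noteq> f x" by (auto simp: V'_def)
        have "f y \<in> V" "f (f y) = y" using less.prems(2) yV(1) by auto
        moreover have "f y \<noteq> x" using yV fx(2) \<open>f (f y) = y\<close> by metis
        moreover have "f y \<noteq> f x" using yV fx(2) \<open>f (f y) = y\<close> by metis
        ultimately show "f y \<in> V' \<and> f (f y) = y" by (simp add: V'_def)
      qed
      show "{y\<in>V'. f y = y} = {x0}" using less.prems(3) x(2) fx0 by (auto simp: V'_def)
    qed
    then show ?thesis using cV by simp
  qed
qed

lemma half_not_int: "(1/2::real) \<notin> \<int>"
proof
  assume "(1/2::real) \<in> \<int>"
  then obtain k :: int where "1/2 = (of_int k :: real)" by (auto elim: Ints_cases)
  then have "1 = 2 * (of_int k :: real)" by simp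
  then have "(1::int) = 2 * k" by linarith
  then show False by presburger
qed

definition lam :: "int \<Rightarrow> int \<Rightarrow> real \<times> real \<Rightarrow> real" where
  "lam a b p = of_int a * fst p + of_int b * snd p"

lemma dvd_lemma:
  assumes "a * b' - a' * b \<noteq> 0"
    and "\<And>h. lam a b h \<in> \<int> \<Longrightarrow> lam a' b' h \<in> \<int> \<Longrightarrow> lam a'' b'' h \<in> \<int>"
  shows "(a * b' - a' * b) dvd (a * b'' - a'' * b)"
proof -
  define Dr where "Dr = real_of_int (a * b' - a' * b)"
  have Dr: "Dr \<noteq> 0" using assms(1) of_int_eq_0_iff unfolding Dr_def by blast
  define h where "h = (- of_int b / Dr, of_int a / Dr)"
  have "lam a b h = 0" using Dr by (simp add: lam_def h_def field_simps)
  moreover have "lam a' b' h = 1" using Dr by (simp add: lam_def h_def field_simps) (simp add: Dr_def algebra_simps)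
  ultimately have "lam a'' b'' h \<in> \<int>" using assms(2) by simp
  moreover have "lam a'' b'' h = real_of_int (a * b'' - a'' * b) / Dr"
    using Dr by (simp add: lam_def h_def field_simps)
  ultimately obtain k where "real_of_int (a * b'' - a'' * b) / Dr = of_int k" by (auto elim: Ints_cases)
  then have "real_of_int (a * b'' - a'' * b) = of_int (k * (a * b' - a' * b))"
    using Dr by (simp add: Dr_def field_simps)
  then have "a * b'' - a'' * b = k * (a * b' - a' * b)" by (simp only: of_int_eq_iff)
  then show ?thesis by simp
qed

lemma coprime_odd: "coprime (a::int) b \<Longrightarrow> odd a \<or> odd b"
proof (rule ccontr)
  assume c: "coprime a b" and "\<not> (odd a \<or> odd b)"
  then have "2 dvd a" "2 dvd b" by auto
  then have "is_unit (2::int)" using coprime_common_divisor[OF c] by blast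
  then show False by simp
qed


lemma parity3:
  fixes a1 b1 a2 b2 a3 b3 m n :: int
  assumes "odd a1 \<or> odd b1" "odd a2 \<or> odd b2" "odd a3 \<or> odd b3"
    "even (a3 - a1 - a2)" "even (b3 - b1 - b2)"
    "even (a1 * m + b1 * n)" "even (a2 * m + b2 * n)" "even (a3 * m + b3 * n)"
  shows "even m \<and> even n"
  using assms by (auto simp: even_add even_mult_iff)


lemma lf_lam: "lf a b c (w + h) = lf a b c w + lam a b h"
  by (simp add: lf_add lam_def)

lemma Ints_diff_iff: "(x::real) \<in> \<int> \<Longrightarrow> (x + y \<in> \<int>) = (y \<in> \<int>)"
  by (metis Ints_add Ints_diff add_diff_cancel_left')

lemma evlam:
  assumes "lam a b h \<in> \<int>" "2 * fst h = of_int M" "2 * snd h = of_int N"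
  shows "even (a * M + b * N)"
proof -
  obtain k where k: "lam a b h = of_int k" using assms(1) by (auto elim: Ints_cases)
  have "2 * lam a b h = of_int a * (2 * fst h) + of_int b * (2 * snd h)" by (simp add: lam_def algebra_simps)
  then have "real_of_int (2 * k) = of_int (a * M + b * N)" using k assms(2,3) by simp
  then have "2 * k = a * M + b * N" by (simp only: of_int_eq_iff)
  then show ?thesis by (metis dvd_triv_left)
qed

lemma lf_refl: "lf a b c (2 *\<^sub>R w - p) = 2 * lf a b c w - lf a b c p"
  by (simp add: lf_def algebra_simps)

context three begin

lemma core_odd:
  assumes cV: "card ((L1 \<inter> L2) \<union> (L1 \<inter> L3) \<union> (L2 \<inter> L3)) = f0" and f0: "0 < f0"
    and cC: "card (components (torus - (L1 \<union> L2 \<union> L3))) = 2 * f0"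
  shows "odd f0"
proof -
  define X where "X = L1 \<inter> L2"
  define Y where "Y = (L1 \<inter> L3) \<union> (L2 \<inter> L3)"
  define V where "V = X \<union> Y"
  have cV': "card V = f0" using cV by (simp add: V_def X_def Y_def Un_assoc)
  have finV: "finite V" using cV' f0 card_gt_0_iff by blast
  have finX: "finite X" "finite Y" using finV by (auto simp: V_def)
  have le: "card (components (torus - (L1 \<union> L2 \<union> L3))) \<le> card X + card Y"
    using chambers_le finX unfolding X_def Y_def by blast
  have cX: "card X \<le> card V" "card Y \<le> card V" using finV by (auto simp: V_def intro: card_mono)
  then have cXV: "card X = card V" and cYV: "card Y = card V" using le cC cV' by linarith+
  have XV: "X = V" using card_subset_eq[OF finV _ cXV] by (auto simp: V_def)
  have YV: "Y = V" using card_subset_eq[OF finV _ cYV] by (auto simp: V_def)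
  have t12: "l3 p \<in> \<int>" if "l1 p \<in> \<int>" "l2 p \<in> \<int>" for p
  proof -
    have "torus_map p \<in> X" using that mem_tl cop1 cop2 by (simp add: X_def)
    then have "torus_map p \<in> Y" using XV YV by simp
    then show ?thesis using mem_tl cop3 by (auto simp: Y_def)
  qed
  have t13: "l2 p \<in> \<int>" if "l1 p \<in> \<int>" "l3 p \<in> \<int>" for p
  proof -
    have "torus_map p \<in> Y" using that mem_tl cop1 cop3 by (simp add: Y_def)
    then have "torus_map p \<in> X" using XV YV by simp
    then show ?thesis using mem_tl cop2 by (auto simp: X_def)
  qed
  have t23: "l1 p \<in> \<int>" if "l2 p \<in> \<int>" "l3 p \<in> \<int>" for p
  proof -
    have "torus_map p \<in> Y" using that mem_tl cop2 cop3 by (simp add: Y_def)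
    then have "torus_map p \<in> X" using XV YV by simp
    then show ?thesis using mem_tl cop1 by (auto simp: X_def)
  qed
  have "X \<noteq> {}" using XV cV' f0 by auto
  then obtain x0 where "x0 \<in> X" by blast
  then obtain w where w: "torus_map w \<in> X" unfolding X_def tl_def by blast
  have w1: "l1 w \<in> \<int>" and w2: "l2 w \<in> \<int>" using w mem_tl cop1 cop2 by (auto simp: X_def)
  have w3: "l3 w \<in> \<int>" using t12 w1 w2 by blast
  have s12: "lam a3 b3 h \<in> \<int>" if "lam a1 b1 h \<in> \<int>" "lam a2 b2 h \<in> \<int>" for h
    using t12[of "w + h"] that w1 w2 w3 by (simp add: lf_lam Ints_diff_iff)
  have s13: "lam a2 b2 h \<in> \<int>" if "lam a1 b1 h \<in> \<int>" "lam a3 b3 h \<in> \<int>" for h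
    using t13[of "w + h"] that w1 w2 w3 by (simp add: lf_lam Ints_diff_iff)
  have s23: "lam a1 b1 h \<in> \<int>" if "lam a2 b2 h \<in> \<int>" "lam a3 b3 h \<in> \<int>" for h
    using t23[of "w + h"] that w1 w2 w3 by (simp add: lf_lam Ints_diff_iff)
  define Dr where "Dr = real_of_int D"
  have Dr: "Dr \<noteq> 0" using Dnz of_int_eq_0_iff unfolding Dr_def by blast
  have D13: "a1 * b3 - a3 * b1 \<noteq> 0"
  proof
    assume z: "a1 * b3 - a3 * b1 = 0"
    define k where "k = 1 / (2 * Dr)"
    define h where "h = (k * - of_int b1, k * of_int a1)"
    have "lam a1 b1 h = 0" by (simp add: lam_def h_def algebra_simps)
    moreover have "lam a3 b3 h = 0"
    proof -
      have "lam a3 b3 h = k * of_int (a1 * b3 - a3 * b1)"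
        by (simp add: lam_def h_def algebra_simps)
      then show ?thesis using z by simp
    qed
    ultimately have "lam a2 b2 h \<in> \<int>" using s13 by simp
    moreover have "lam a2 b2 h = 1/2"
    proof -
      have "lam a2 b2 h = k * Dr" by (simp add: lam_def h_def Dr_def algebra_simps)
      then show ?thesis using Dr by (simp add: k_def)
    qed
    ultimately show False using half_not_int by simp
  qed
  have D23: "a2 * b3 - a3 * b2 \<noteq> 0"
  proof
    assume z: "a2 * b3 - a3 * b2 = 0"
    define k where "k = 1 / (2 * Dr)"
    define h where "h = (k * - of_int b2, k * of_int a2)"
    have "lam a2 b2 h = 0" by (simp add: lam_def h_def algebra_simps)
    moreover have "lam a3 b3 h = 0"
    proof -
      have "lam a3 b3 h = k * of_int (a2 * b3 - a3 * b2)"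
        by (simp add: lam_def h_def algebra_simps)
      then show ?thesis using z by simp
    qed
    ultimately have "lam a1 b1 h \<in> \<int>" using s23 by simp
    moreover have "lam a1 b1 h = - (1/2)"
    proof -
      have "lam a1 b1 h = - (k * Dr)" by (simp add: lam_def h_def Dr_def algebra_simps)
      then show ?thesis using Dr by (simp add: k_def)
    qed
    ultimately have "- (- (1/2::real)) \<in> \<int>" by (metis Ints_minus)
    then show False using half_not_int by simp
  qed
  have d1: "(a1 * b2 - a2 * b1) dvd (a1 * b3 - a3 * b1)" by (rule dvd_lemma[OF Dnz s12])
  have d2: "(a1 * b3 - a3 * b1) dvd (a1 * b2 - a2 * b1)" by (rule dvd_lemma[OF D13 s13])
  have Dnz': "a2 * b1 - a1 * b2 \<noteq> 0" using Dnz by simp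
  have d3: "(a2 * b1 - a1 * b2) dvd (a2 * b3 - a3 * b2)" by (rule dvd_lemma[OF Dnz']) (use s12 in auto)
  have d4: "(a2 * b3 - a3 * b2) dvd (a2 * b1 - a1 * b2)" by (rule dvd_lemma[OF D23]) (use s23 in auto)
  define s where "s = a3 * b2 - a2 * b3"
  define t where "t = a1 * b3 - a3 * b1"
  have as: "\<bar>s\<bar> = \<bar>D\<bar>"
  proof -
    have e: "\<bar>a2 * b3 - a3 * b2\<bar> = \<bar>a2 * b1 - a1 * b2\<bar>" by (rule zdvd_antisym_abs[OF d4 d3])
    have "s = - (a2 * b3 - a3 * b2)" "D = - (a2 * b1 - a1 * b2)" by (simp_all add: s_def)
    then show ?thesis using e by (simp only: abs_minus_cancel)
  qed
  have at: "\<bar>t\<bar> = \<bar>D\<bar>" unfolding t_def by (rule zdvd_antisym_abs[OF d2 d1])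
  have cr1: "D * a3 = s * a1 + t * a2" by (simp add: s_def t_def algebra_simps)
  have cr2: "D * b3 = s * b1 + t * b2" by (simp add: s_def t_def algebra_simps)
  have ev: "even (a3 - a1 - a2) \<and> even (b3 - b1 - b2)"
  proof -
    have "s = D \<or> s = - D" "t = D \<or> t = - D" using as at by (auto simp: abs_eq_iff)
    then consider "s = D" "t = D" | "s = D" "t = - D" | "s = - D" "t = D" | "s = - D" "t = - D" by blast
    then show ?thesis
    proof cases
      case 1
      have x1: "D * a3 = D * (a1 + a2)" using cr1 1 by algebra
      have x2: "D * b3 = D * (b1 + b2)" using cr2 1 by algebra
      have "a3 = a1 + a2" using x1 Dnz by (simp only: mult_cancel_left) simp
      moreover have "b3 = b1 + b2" using x2 Dnz by (simp only: mult_cancel_left) simp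
      ultimately show ?thesis by simp
    next
      case 2
      have x1: "D * a3 = D * (a1 - a2)" using cr1 2 by algebra
      have x2: "D * b3 = D * (b1 - b2)" using cr2 2 by algebra
      have "a3 = a1 - a2" using x1 Dnz by (simp only: mult_cancel_left) simp
      moreover have "b3 = b1 - b2" using x2 Dnz by (simp only: mult_cancel_left) simp
      ultimately show ?thesis by simp
    next
      case 3
      have x1: "D * a3 = D * (a2 - a1)" using cr1 3 by algebra
      have x2: "D * b3 = D * (b2 - b1)" using cr2 3 by algebra
      have "a3 = a2 - a1" using x1 Dnz by (simp only: mult_cancel_left) simp
      moreover have "b3 = b2 - b1" using x2 Dnz by (simp only: mult_cancel_left) simp
      ultimately show ?thesis by simp
    next
      case 4
      have x1: "D * a3 = D * (- a1 - a2)" using cr1 4 by algebra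
      have x2: "D * b3 = D * (- b1 - b2)" using cr2 4 by algebra
      have "a3 = - a1 - a2" using x1 Dnz by (simp only: mult_cancel_left) simp
      moreover have "b3 = - b1 - b2" using x2 Dnz by (simp only: mult_cancel_left) simp
      ultimately show ?thesis by simp
    qed
  qed
  have ev3: "even (a1 * M + b1 * N) \<and> even (a2 * M + b2 * N) \<and> even (a3 * M + b3 * N) \<Longrightarrow> even M \<and> even N" for M N
    using parity3[OF coprime_odd[OF cop1] coprime_odd[OF cop2] coprime_odd[OF cop3]] ev by blast
  define inv where "inv x = torus_map (2 *\<^sub>R w - (SOME p. x = torus_map p))" for x
  have inv_tm: "inv (torus_map p) = torus_map (2 *\<^sub>R w - p)" for p
  proof -
    define p' where "p' = (SOME q. torus_map p = torus_map q)"
    have "torus_map p = torus_map p'" unfolding p'_def by (rule someI[of _ p]) simp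
    then have "fst p - fst p' \<in> \<int>" "snd p - snd p' \<in> \<int>" using TM_eq by blast+
    moreover have "fst (2 *\<^sub>R w - p') - fst (2 *\<^sub>R w - p) = fst p - fst p'"
      "snd (2 *\<^sub>R w - p') - snd (2 *\<^sub>R w - p) = snd p - snd p'" by simp_all
    ultimately have "torus_map (2 *\<^sub>R w - p') = torus_map (2 *\<^sub>R w - p)" using TM_eq by metis
    then show ?thesis by (simp add: inv_def p'_def)
  qed
  have Xchar: "x \<in> X \<longleftrightarrow> (\<exists>p. x = torus_map p \<and> l1 p \<in> \<int> \<and> l2 p \<in> \<int>)" for x
  proof
    assume "x \<in> X"
    then obtain p where "x = torus_map p" unfolding X_def tl_def by blast
    then show "\<exists>p. x = torus_map p \<and> l1 p \<in> \<int> \<and> l2 p \<in> \<int>" using \<open>x \<in> X\<close> mem_tl cop1 cop2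
      unfolding X_def by blast
  next
    assume "\<exists>p. x = torus_map p \<and> l1 p \<in> \<int> \<and> l2 p \<in> \<int>"
    then show "x \<in> X" using mem_tl cop1 cop2 unfolding X_def by blast
  qed
  have refl_int: "lf a b c (2 *\<^sub>R w - p) \<in> \<int>" if "lf a b c w \<in> \<int>" "lf a b c p \<in> \<int>" for a b c p
    using that by (simp add: lf_refl)
  have "odd (card X)"
  proof (rule invol_odd[of X inv "torus_map w"])
    show "finite X" by (rule finX(1))
    show "\<forall>x\<in>X. inv x \<in> X \<and> inv (inv x) = x"
    proof
      fix x assume "x \<in> X"
      then obtain p where p: "x = torus_map p" "l1 p \<in> \<int>" "l2 p \<in> \<int>" using Xchar by blast
      have "inv x = torus_map (2 *\<^sub>R w - p)" using p by (simp add: inv_tm)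
      moreover have "l1 (2 *\<^sub>R w - p) \<in> \<int>" "l2 (2 *\<^sub>R w - p) \<in> \<int>" using refl_int w1 w2 p by blast+
      moreover have "inv (inv x) = x" using p by (simp add: inv_tm)
      ultimately show "inv x \<in> X \<and> inv (inv x) = x" using Xchar by blast
    qed
    show "{x\<in>X. inv x = x} = {torus_map w}"
    proof
      have "inv (torus_map w) = torus_map w" by (simp add: inv_tm scaleR_2)
      then show "{torus_map w} \<subseteq> {x\<in>X. inv x = x}" using w by simp
      show "{x\<in>X. inv x = x} \<subseteq> {torus_map w}"
      proof
        fix x assume "x \<in> {x\<in>X. inv x = x}"
        then obtain p where p: "x = torus_map p" "l1 p \<in> \<int>" "l2 p \<in> \<int>" "inv x = x" using Xchar by blast
        then have "torus_map (2 *\<^sub>R w - p) = torus_map p" by (simp add: inv_tm)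
        then have "fst (2 *\<^sub>R w - p) - fst p \<in> \<int>" "snd (2 *\<^sub>R w - p) - snd p \<in> \<int>" using TM_eq by blast+
        then obtain M' N' where MN: "fst (2 *\<^sub>R w - p) - fst p = of_int M'" "snd (2 *\<^sub>R w - p) - snd p = of_int N'"
          by (meson Ints_cases)
        define h where "h = p - w"
        have hM: "2 * fst h = of_int (- M')" "2 * snd h = of_int (- N')" using MN by (simp_all add: h_def)
        have ph: "p = w + h" by (simp add: h_def)
        have lh1: "lam a1 b1 h \<in> \<int>" using p(2) w1 unfolding ph lf_lam by (simp add: Ints_diff_iff)
        have lh2: "lam a2 b2 h \<in> \<int>" using p(3) w2 unfolding ph lf_lam by (simp add: Ints_diff_iff)
        have lh3: "lam a3 b3 h \<in> \<int>" using s12 lh1 lh2 by blast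
        have "even (- M') \<and> even (- N')"
          using ev3 evlam[OF lh1 hM] evlam[OF lh2 hM] evlam[OF lh3 hM] by blast
        then obtain M N where "- M' = 2 * M" "- N' = 2 * N" by (meson evenE)
        then have "fst p - fst w = of_int M" "snd p - snd w = of_int N" using hM by (simp_all add: h_def)
        then have "torus_map p = torus_map w" using TM_eq by (metis Ints_of_int)
        then show "x \<in> {torus_map w}" using p by simp
      qed
    qed
  qed
  then show ?thesis using XV cV' by simp
qed

end

definition theta :: "complex \<Rightarrow> real" where "theta u = Arg2pi u / (2 * pi)"

lemma theta_cis: "theta (cis (2 * pi * t)) = frac t"
proof -
  have a: "0 \<le> 2 * pi * frac t" "2 * pi * frac t < 2 * pi"
    using frac_ge_0[of t] frac_lt_1[of t] pi_gt_zero by (auto simp: mult_less_cancel_left)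
  have "cis (2 * pi * frac t) = cis (2 * pi * t)" unfolding cis2pi_eq
    by (simp add: frac_def)
  then have "of_real 1 * exp (\<i> * of_real (2 * pi * frac t)) = cis (2 * pi * t)"
    by (simp add: cis_conv_exp)
  then have "Arg2pi (cis (2 * pi * t)) = 2 * pi * frac t"
    using Arg2pi_unique a by (metis zero_less_one)
  then show ?thesis by (simp add: theta_def)
qed

lemma cis_not_nonneg: "t \<notin> \<int> \<Longrightarrow> cis (2 * pi * t) \<notin> \<real>\<^sub>\<ge>\<^sub>0"
proof
  assume t: "t \<notin> \<int>" and c: "cis (2 * pi * t) \<in> \<real>\<^sub>\<ge>\<^sub>0"
  then obtain r where r: "cis (2 * pi * t) = of_real r" "r \<ge> 0" by (auto simp: nonneg_Reals_def)
  then have "norm (of_real r :: complex) = 1" by (metis norm_cis)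
  then have "r = 1" using r(2) by simp
  then have "cis (2 * pi * t) = cis (2 * pi * 0)" using r(1) by simp
  then have "t \<in> \<int>" unfolding cis2pi_eq by simp
  then show False using t by simp
qed

lemma theta_isCont: "t \<notin> \<int> \<Longrightarrow> isCont theta (cis (2 * pi * t))"
  unfolding theta_def by (intro continuous_intros continuous_at_Arg2pi cis_not_nonneg) auto

lemma lower_bound_general:
  fixes Psi :: "'a::topological_space \<Rightarrow> 'b::metric_space"
  assumes "continuous_on S Psi" "Psi ` S \<subseteq> F" "finite F" "finite (components S)"
  shows "card (Psi ` S) \<le> card (components S)"
proof -
  have sing: "\<exists>v. Psi ` C = {v}" if C: "C \<in> components S" for C
  proof -
    have "C \<subseteq> S" using C by (simp add: in_components_subset)
    moreover have "connected C" using C by (simp add: in_components_connected)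
    ultimately have "connected (Psi ` C)" using assms(1) by (metis connected_continuous_image continuous_on_subset)
    moreover have "finite (Psi ` C)" using \<open>C \<subseteq> S\<close> assms(2,3) by (meson finite_subset image_mono)
    moreover have "Psi ` C \<noteq> {}" using C in_components_nonempty by blast
    ultimately show ?thesis using connected_finite_iff_sing by blast
  qed
  define val where "val C = the_elem (Psi ` C)" for C
  have "Psi ` S \<subseteq> val ` components S"
  proof
    fix v assume "v \<in> Psi ` S"
    then obtain s where s: "s \<in> S" "v = Psi s" by blast
    define C where "C = connected_component_set S s"
    have C: "C \<in> components S" using s(1) by (simp add: C_def components_def)
    have "s \<in> C" using s(1) by (simp add: C_def)
    then obtain u where "Psi ` C = {u}" "Psi s = u" using sing[OF C] by blast
    then have "v = val C" using s by (simp add: val_def)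
    then show "v \<in> val ` components S" using C by blast
  qed
  then show ?thesis by (meson assms(4) card_image_le card_mono finite_imageI order_trans)
qed

lemma isCont_cis': "isCont cis x"
  using continuous_on_eq_continuous_at[of UNIV cis] continuous_on_cis[of UNIV "\<lambda>x. x"] by simp

lemma root_inj:
  fixes k k' :: int and n :: nat
  assumes "0 < n" "\<bar>k - k'\<bar> < int n" "cis (2 * pi * (of_int k / real n)) = cis (2 * pi * (of_int k' / real n))"
  shows "k = k'"
proof -
  have "of_int k / real n - of_int k' / real n \<in> \<int>" using assms(3) cis2pi_eq by blast
  then obtain m where m: "of_int k / real n - of_int k' / real n = of_int m" by (auto elim: Ints_cases)
  then have "real_of_int (k - k') = of_int (m * int n)" using assms(1) by (simp add: field_simps)
  then have e: "k - k' = m * int n" by (simp only: of_int_eq_iff)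
  show ?thesis
  proof (cases "m = 0")
    case True then show ?thesis using e by simp
  next
    case False
    then have "\<bar>m * int n\<bar> \<ge> int n" using assms(1) by (simp add: abs_mult)
    then show ?thesis using e assms(2) by simp
  qed
qed

locale cons =
  fixes n :: nat
  assumes odd_n: "odd n"
begin

lemma npos: "0 < n" using odd_n by (cases n) auto

lemma cop_n2: "coprime (int n) 2"
  using odd_n by (simp add: coprime_commute)

sublocale T: three 0 1 "int n" 1 "int n" 2 0 0 0
  by unfold_locales (use npos cop_n2 in auto)

lemma l_simps: "lf 0 1 0 p = snd p" "lf (int n) 1 0 p = real n * fst p + snd p"
  "lf (int n) 2 0 p = real n * fst p + 2 * snd p"
  by (simp_all add: lf_def)

definition "PP p \<longleftrightarrow> snd p \<in> \<int> \<and> real n * fst p \<in> \<int>"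

definition "W = (\<lambda>k. torus_map (real k / real n, 0)) ` {..<n}"

lemma W_card: "card W = n"
proof -
  have "inj_on (\<lambda>k. torus_map (real k / real n, 0)) {..<n}"
  proof
    fix k k' assume kk: "k \<in> {..<n}" "k' \<in> {..<n}" "torus_map (real k / real n, 0) = torus_map (real k' / real n, 0)"
    then have "cis (2 * pi * (of_int (int k) / real n)) = cis (2 * pi * (of_int (int k') / real n))"
      by (simp add: torus_map_def)
    then have "int k = int k'" using kk(1,2) npos by (intro root_inj[of n]) auto
    then show "k = k'" by simp
  qed
  then show ?thesis by (simp add: W_def card_image)
qed

lemma W_char: "torus_map p \<in> W \<longleftrightarrow> PP p"
proof
  assume "torus_map p \<in> W"
  then obtain k where k: "torus_map p = torus_map (real k / real n, 0)" by (auto simp: W_def)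
  then have "fst p - real k / real n \<in> \<int>" "snd p \<in> \<int>" using TM_eq by auto
  then obtain m where m: "fst p - real k / real n = of_int m" by (auto elim: Ints_cases)
  then have "real n * fst p = of_int (int k + m * int n)" using npos by (simp add: field_simps)
  then show "PP p" using \<open>snd p \<in> \<int>\<close> by (simp add: PP_def)
next
  assume "PP p"
  then obtain K where K: "real n * fst p = of_int K" and s: "snd p \<in> \<int>" by (auto simp: PP_def elim: Ints_cases)
  define k where "k = nat (K mod int n)"
  have k0: "0 \<le> K mod int n" "K mod int n < int n" using npos by simp_all
  have k: "int k = K mod int n" "k < n" using k0 unfolding k_def by linarith+
  have "fst p - real k / real n = of_int (K div int n)"
  proof -
    have "K = int n * (K div int n) + int k" using k(1) by simp
    then have "real_of_int K = real n * of_int (K div int n) + real k" by (metis of_int_add of_int_mult of_int_of_nat_eq)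
    then show ?thesis using K npos by (simp add: field_simps)
  qed
  then have "torus_map p = torus_map (real k / real n, 0)" using s by (simp add: TM_eq)
  then show "torus_map p \<in> W" using k(2) by (auto simp: W_def)
qed

lemma tl_sub_torus: "tl a b c \<subseteq> torus" by (auto simp: tl_def torus_def)

lemma V_eq: "T.L1 \<inter> T.L2 = W" "T.L1 \<inter> T.L3 = W" "T.L2 \<inter> T.L3 = W"
proof -
  have i2: "x \<in> \<int> \<Longrightarrow> 2 * x \<in> \<int>" for x :: real by (metis Ints_add mult_2)
  have key: "torus_map p \<in> T.L1 \<inter> T.L2 \<longleftrightarrow> PP p" "torus_map p \<in> T.L1 \<inter> T.L3 \<longleftrightarrow> PP p"
    "torus_map p \<in> T.L2 \<inter> T.L3 \<longleftrightarrow> PP p" for p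
  proof -
    have m: "torus_map p \<in> T.L1 \<longleftrightarrow> snd p \<in> \<int>" "torus_map p \<in> T.L2 \<longleftrightarrow> real n * fst p + snd p \<in> \<int>"
      "torus_map p \<in> T.L3 \<longleftrightarrow> real n * fst p + 2 * snd p \<in> \<int>"
      using mem_tl T.cop1 T.cop2 T.cop3 l_simps by auto
    have e1: "real n * fst p = (real n * fst p + snd p) - snd p" by simp
    have e2: "real n * fst p = (real n * fst p + 2 * snd p) - 2 * snd p" by simp
    have e3: "snd p = (real n * fst p + 2 * snd p) - (real n * fst p + snd p)" by simp
    have e4: "real n * fst p = 2 * (real n * fst p + snd p) - (real n * fst p + 2 * snd p)" by simp
    show "torus_map p \<in> T.L1 \<inter> T.L2 \<longleftrightarrow> PP p" unfolding Int_iff m PP_def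
      by (metis e1 Ints_add Ints_diff)
    show "torus_map p \<in> T.L1 \<inter> T.L3 \<longleftrightarrow> PP p" unfolding Int_iff m PP_def
      by (metis e2 i2 Ints_add Ints_diff)
    show "torus_map p \<in> T.L2 \<inter> T.L3 \<longleftrightarrow> PP p" unfolding Int_iff m PP_def
      by (metis e3 e4 i2 Ints_add Ints_diff)
  qed
  have all: "X \<subseteq> torus \<Longrightarrow> (\<And>p. torus_map p \<in> X \<longleftrightarrow> PP p) \<Longrightarrow> X = W" for X
  proof (intro set_eqI iffI)
    fix x assume X: "X \<subseteq> torus" "\<And>p. torus_map p \<in> X \<longleftrightarrow> PP p"
    {
      assume "x \<in> X"
      then obtain p where "x = torus_map p" using X(1) by (auto simp: torus_def)
      then show "x \<in> W" using X(2) W_char \<open>x \<in> X\<close> by blast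
    next
      assume "x \<in> W"
      then obtain p where "x = torus_map p" by (auto simp: W_def)
      then show "x \<in> X" using X(2) W_char \<open>x \<in> W\<close> by blast
    }
  qed
  show "T.L1 \<inter> T.L2 = W" by (rule all) (use tl_sub_torus key in auto)
  show "T.L1 \<inter> T.L3 = W" by (rule all) (use tl_sub_torus key in auto)
  show "T.L2 \<inter> T.L3 = W" by (rule all) (use tl_sub_torus key in auto)
qed

end

context cons begin

definition Psi :: "complex \<times> complex \<Rightarrow> real \<times> complex" where
  "Psi q = (theta (snd q) + theta (fst q ^ n * snd q) - theta (fst q ^ n * (snd q)^2),
            fst q * cis (- (2 * pi * (theta (fst q ^ n * snd q) - theta (snd q))) / real n))"

lemma tm_pows: "fst (torus_map p) ^ n * snd (torus_map p) = cis (2 * pi * (real n * fst p + snd p))"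
  "fst (torus_map p) ^ n * (snd (torus_map p))^2 = cis (2 * pi * (real n * fst p + 2 * snd p))"
  "snd (torus_map p) = cis (2 * pi * snd p)" "fst (torus_map p) = cis (2 * pi * fst p)"
proof -
  obtain x y where p: "p = (x, y)" by (cases p)
  have "cis (2 * pi * x) ^ n * cis (2 * pi * y) = cis (real n * (2 * pi * x) + 2 * pi * y)"
    by (simp add: Complex.DeMoivre cis_mult)
  also have "real n * (2 * pi * x) + 2 * pi * y = 2 * pi * (real n * x + y)" by (simp add: algebra_simps)
  finally show "fst (torus_map p) ^ n * snd (torus_map p) = cis (2 * pi * (real n * fst p + snd p))"
    by (simp add: p torus_map_def)
  have "cis (2 * pi * x) ^ n * (cis (2 * pi * y))^2 = cis (real n * (2 * pi * x) + real 2 * (2 * pi * y))"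
    by (simp only: Complex.DeMoivre cis_mult)
  also have "real n * (2 * pi * x) + real 2 * (2 * pi * y) = 2 * pi * (real n * x + 2 * y)" by (simp add: algebra_simps)
  finally show "fst (torus_map p) ^ n * (snd (torus_map p))^2 = cis (2 * pi * (real n * fst p + 2 * snd p))"
    by (simp add: p torus_map_def)
  show "snd (torus_map p) = cis (2 * pi * snd p)" "fst (torus_map p) = cis (2 * pi * fst p)"
    by (simp_all add: p torus_map_def)
qed

lemma Psi_tm: "Psi (torus_map p) = (frac (snd p) + frac (real n * fst p + snd p) - frac (real n * fst p + 2 * snd p),
   cis (2 * pi * fst p) * cis (- (2 * pi * (frac (real n * fst p + snd p) - frac (snd p))) / real n))"
  unfolding Psi_def tm_pows(1) tm_pows(2) by (simp add: tm_pows(3,4) theta_cis)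

lemma Psi_cont: "continuous_on (torus - (T.L1 \<union> T.L2 \<union> T.L3)) Psi"
proof (rule continuous_at_imp_continuous_on, rule ballI)
  fix q assume "q \<in> torus - (T.L1 \<union> T.L2 \<union> T.L3)"
  then obtain p where p: "p \<in> T.G" "q = torus_map p" using T.S_eq by auto
  then have nz: "snd p \<notin> \<int>" "real n * fst p + snd p \<notin> \<int>" "real n * fst p + 2 * snd p \<notin> \<int>"
    by (auto simp: T.G_def l_simps)
  have c1: "isCont (\<lambda>q. theta (snd q)) q"
    by (rule isCont_o2[OF continuous_snd[OF continuous_ident]]) (use nz in \<open>simp add: p tm_pows theta_isCont\<close>)
  have "isCont theta (fst q ^ n * snd q)" using nz by (simp add: p tm_pows(1) theta_isCont)
  then have c2: "isCont (\<lambda>q. theta (fst q ^ n * snd q)) q"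
    using isCont_o2[where f="\<lambda>q. fst q ^ n * snd q" and a=q and g=theta] by (simp add: continuous_intros)
  have "isCont theta (fst q ^ n * (snd q)^2)" using nz by (simp add: p tm_pows(2) theta_isCont)
  then have c3: "isCont (\<lambda>q. theta (fst q ^ n * (snd q)^2)) q"
    using isCont_o2[where f="\<lambda>q. fst q ^ n * (snd q)^2" and a=q and g=theta] by (simp add: continuous_intros)
  have c4: "isCont (\<lambda>q. cis (- (2 * pi * (theta (fst q ^ n * snd q) - theta (snd q))) / real n)) q"
    by (rule isCont_o2[OF _ isCont_cis']) (use npos in \<open>intro continuous_intros c1 c2, auto\<close>)
  show "isCont Psi q" unfolding Psi_def
    by (intro continuous_intros c1 c2 c3 c4)
qed


definition "R = (\<lambda>k. cis (2 * pi * (real k / real n))) ` {..<n}"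
definition "FF = ({0, 1} \<times> R :: (real \<times> complex) set)"

lemma rootR: "cis (2 * pi * (of_int K / real n)) \<in> R"
proof -
  define k where "k = nat (K mod int n)"
  have k0: "0 \<le> K mod int n" "K mod int n < int n" using npos by simp_all
  have k: "int k = K mod int n" "k < n" using k0 unfolding k_def by linarith+
  have "of_int K / real n - real k / real n = of_int (K div int n)"
  proof -
    have "K = int n * (K div int n) + int k" using k(1) by simp
    then have "real_of_int K = real n * of_int (K div int n) + real k" by (metis of_int_add of_int_mult of_int_of_nat_eq)
    then show ?thesis using npos by (simp add: field_simps)
  qed
  then have "cis (2 * pi * (of_int K / real n)) = cis (2 * pi * (real k / real n))"
    unfolding cis2pi_eq by (metis Ints_of_int)
  then show ?thesis using k(2) by (auto simp: R_def)
qed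

lemma Psi_F: "Psi (torus_map p) \<in> FF"
proof -
  define A where "A = snd p"
  define B where "B = real n * fst p + snd p"
  have AB: "real n * fst p + 2 * snd p = A + B" by (simp add: A_def B_def)
  have e1: "frac A + frac B - frac (A + B) \<in> {0, 1}" by (simp add: frac_add)
  define K where "K = \<lfloor>B\<rfloor> - \<lfloor>A\<rfloor>"
  have "2 * pi * fst p + - (2 * pi * (frac B - frac A)) / real n = 2 * pi * (of_int K / real n)"
    using npos by (simp add: K_def frac_def B_def A_def field_simps)
  then have e2: "cis (2 * pi * fst p) * cis (- (2 * pi * (frac B - frac A)) / real n) \<in> R"
    using rootR[of K] by (simp add: cis_mult)
  have "Psi (torus_map p) = (frac A + frac B - frac (A + B), cis (2 * pi * fst p) * cis (- (2 * pi * (frac B - frac A)) / real n))"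
    unfolding Psi_tm AB[symmetric] by (simp add: A_def B_def)
  then show ?thesis using e1 e2 unfolding FF_def by simp
qed

lemma frac_nz: "frac x = c \<Longrightarrow> c \<noteq> 0 \<Longrightarrow> x \<notin> \<int>"
  using frac_eq_0_iff[of x] by auto

definition "r k = cis (2 * pi * (real k / real n))"
definition "s0 k = ((real k + 1/4) / real n, 1/4 :: real)"
definition "s1 k = ((real k + 3/4) / real n, 3/4 :: real)"

lemma s0_vals: "snd (s0 k) \<notin> \<int>" "real n * fst (s0 k) + snd (s0 k) \<notin> \<int>" "real n * fst (s0 k) + 2 * snd (s0 k) \<notin> \<int>"
  "Psi (torus_map (s0 k)) = (0, r k)"
proof -
  have a: "real n * fst (s0 k) + snd (s0 k) = real k + 1/2" "real n * fst (s0 k) + 2 * snd (s0 k) = real k + 3/4"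
    "snd (s0 k) = 1/4" using npos by (simp_all add: s0_def field_simps)
  have f: "frac (real k + 1/2) = 1/2" "frac (real k + 3/4) = 3/4" "frac (1/4 :: real) = 1/4"
    by (rule iffD2[OF frac_unique_iff], simp)+
  show "snd (s0 k) \<notin> \<int>" "real n * fst (s0 k) + snd (s0 k) \<notin> \<int>" "real n * fst (s0 k) + 2 * snd (s0 k) \<notin> \<int>"
    unfolding a(1,2) unfolding a(3) using frac_nz[OF f(1)] frac_nz[OF f(2)] frac_nz[OF f(3)] by simp_all
  have "cis (2 * pi * fst (s0 k)) * cis (- (2 * pi * (1/2 - 1/4)) / real n) = cis (2 * pi * fst (s0 k) + - (2 * pi * (1/2 - 1/4)) / real n)"
    by (simp add: cis_mult)
  also have "2 * pi * fst (s0 k) + - (2 * pi * (1/2 - 1/4)) / real n = 2 * pi * (real k / real n)"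
    using npos by (simp add: s0_def field_simps)
  finally show "Psi (torus_map (s0 k)) = (0, r k)" unfolding Psi_tm a(1,2) unfolding a(3) f r_def by simp
qed

lemma s1_vals: "snd (s1 k) \<notin> \<int>" "real n * fst (s1 k) + snd (s1 k) \<notin> \<int>" "real n * fst (s1 k) + 2 * snd (s1 k) \<notin> \<int>"
  "Psi (torus_map (s1 k)) = (1, r (k + 1))"
proof -
  have a: "real n * fst (s1 k) + snd (s1 k) = real (k + 1) + 1/2" "real n * fst (s1 k) + 2 * snd (s1 k) = real (k + 2) + 1/4"
    "snd (s1 k) = 3/4" using npos by (simp_all add: s1_def field_simps)
  have f: "frac (real (k + 1) + 1/2) = 1/2" "frac (real (k + 2) + 1/4) = 1/4" "frac (3/4 :: real) = 3/4"
    by (rule iffD2[OF frac_unique_iff], simp)+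
  show "snd (s1 k) \<notin> \<int>" "real n * fst (s1 k) + snd (s1 k) \<notin> \<int>" "real n * fst (s1 k) + 2 * snd (s1 k) \<notin> \<int>"
    unfolding a(1,2) unfolding a(3) using frac_nz[OF f(1)] frac_nz[OF f(2)] frac_nz[OF f(3)] by simp_all
  have "cis (2 * pi * fst (s1 k)) * cis (- (2 * pi * (1/2 - 3/4)) / real n) = cis (2 * pi * fst (s1 k) + - (2 * pi * (1/2 - 3/4)) / real n)"
    by (simp add: cis_mult)
  also have "2 * pi * fst (s1 k) + - (2 * pi * (1/2 - 3/4)) / real n = 2 * pi * (real (k + 1) / real n)"
    using npos by (simp add: s1_def field_simps)
  finally show "Psi (torus_map (s1 k)) = (1, r (k + 1))" unfolding Psi_tm a(1,2) unfolding a(3) f r_def by simp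
qed


abbreviation "SS \<equiv> torus - (T.L1 \<union> T.L2 \<union> T.L3)"

lemma comps_upper: "finite (components SS) \<and> card (components SS) \<le> 2 * n"
proof -
  have "finite W" by (simp add: W_def)
  then have "finite (T.L1 \<inter> T.L2)" "finite ((T.L1 \<inter> T.L3) \<union> (T.L2 \<inter> T.L3))" using V_eq by simp_all
  then show ?thesis using T.chambers_le V_eq W_card by simp
qed

lemma r_inj: "k < n \<Longrightarrow> k' < n \<Longrightarrow> r (k + c) = r (k' + c) \<Longrightarrow> k = k'"
proof -
  assume k: "k < n" "k' < n" "r (k + c) = r (k' + c)"
  then have "cis (2 * pi * (of_int (int (k + c)) / real n)) = cis (2 * pi * (of_int (int (k' + c)) / real n))"
    by (simp add: r_def)
  moreover have "\<bar>int (k + c) - int (k' + c)\<bar> < int n" using k(1,2) by simp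
  ultimately have "int (k + c) = int (k' + c)" using root_inj[OF npos] by blast
  then show "k = k'" by simp
qed

lemma comps_lower: "2 * n \<le> card (components SS)"
proof -
  define Vals where "Vals = (\<lambda>k. (0::real, r k)) ` {..<n} \<union> (\<lambda>k. (1::real, r (k + 1))) ` {..<n}"
  have c0: "card ((\<lambda>k. (0::real, r k)) ` {..<n}) = n"
  proof -
    have "inj_on (\<lambda>k. (0::real, r k)) {..<n}"
      by (rule inj_onI) (use r_inj[of _ _ 0] in auto)
    then show ?thesis by (simp add: card_image)
  qed
  have c1: "card ((\<lambda>k. (1::real, r (k + 1))) ` {..<n}) = n"
  proof -
    have "inj_on (\<lambda>k. (1::real, r (k + 1))) {..<n}"
      by (rule inj_onI) (use r_inj[of _ _ 1] in auto)
    then show ?thesis by (simp add: card_image)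
  qed
  have cV: "card Vals = 2 * n" unfolding Vals_def
    by (subst card_Un_disjoint) (use c0 c1 in auto)
  have inS: "torus_map p \<in> SS" if "p \<in> T.G" for p using that T.S_eq by blast
  have "Vals \<subseteq> Psi ` SS"
  proof
    fix v assume "v \<in> Vals"
    then consider k where "v = (0, r k)" | k where "v = (1, r (k + 1))" by (auto simp: Vals_def)
    then show "v \<in> Psi ` SS"
    proof cases
      case 1
      have "s0 k \<in> T.G" using s0_vals by (simp add: T.G_def l_simps)
      then show ?thesis using 1 s0_vals(4)[of k] inS by (metis image_eqI)
    next
      case 2
      have "s1 k \<in> T.G" using s1_vals by (simp add: T.G_def l_simps)
      then show ?thesis using 2 s1_vals(4)[of k] inS by (metis image_eqI)
    qed
  qed
  moreover have PF: "Psi ` SS \<subseteq> FF"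
  proof
    fix v assume "v \<in> Psi ` SS"
    then obtain x where "x \<in> SS" "v = Psi x" by blast
    then obtain p where "x = torus_map p" by (auto simp: torus_def)
    then show "v \<in> FF" using Psi_F \<open>v = Psi x\<close> by simp
  qed
  moreover have fF: "finite FF" by (simp add: FF_def R_def)
  ultimately have "card Vals \<le> card (Psi ` SS)" by (meson card_mono finite_subset)
  also have "\<dots> \<le> card (components SS)"
    by (rule lower_bound_general[OF Psi_cont PF fF]) (use comps_upper in blast)
  finally show ?thesis using cV by simp
qed

end

lemma tl_type: "coprime a b \<Longrightarrow> toric_line_of_type (tl a b c) a b"
  by (auto simp: toric_line_of_type_def tl_def)

lemma tl_neg: "tl (- a) (- b) c = tl a b (- c)"
proof -
  have "{(x, y). real_of_int (- a) * x + real_of_int (- b) * y = c} = {(x, y). real_of_int a * x + real_of_int b * y = - c}"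
    by auto
  then show ?thesis by (simp add: tl_def)
qed

lemma type_tl: "toric_line_of_type l a b \<Longrightarrow> coprime a b \<and> (\<exists>c. l = tl a b c)"
  by (auto simp: toric_line_of_type_def tl_def)

lemma type_det:
  assumes "toric_line_of_type (tl a b c) a' b'" "coprime a b"
  shows "a * b' - a' * b = 0"
proof (rule ccontr)
  assume dz: "a * b' - a' * b \<noteq> 0"
  obtain c' where cop': "coprime a' b'" and eq: "tl a b c = tl a' b' c'" using type_tl[OF assms(1)] by blast
  define N where "N = (of_int a)^2 + (of_int b :: real)^2"
  have N: "0 < N"
  proof -
    have "\<not> (a = 0 \<and> b = 0)" using assms(2) by auto
    then show ?thesis by (auto simp: N_def sum_power2_gt_zero_iff)
  qed
  define p where "p t = (c * of_int a / N + t * (- of_int b), c * of_int b / N + t * of_int a)" for t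
  have on: "of_int a * fst (p t) + of_int b * snd (p t) = c" for t
  proof -
    have "N \<noteq> 0" using N by simp
    then show ?thesis by (simp add: p_def field_simps) (simp add: N_def power2_eq_square algebra_simps)
  qed
  have "torus_map (p t) \<in> tl a b c" for t using on[of t] unfolding tl_def by (cases "p t") force
  then have "torus_map (p t) \<in> tl a' b' c'" for t using eq by simp
  then have int: "lf a' b' c' (p t) \<in> \<int>" for t using mem_tl[OF cop'] by blast
  define Dr where "Dr = real_of_int (a * b' - a' * b)"
  have Dr: "Dr \<noteq> 0" using dz of_int_eq_0_iff unfolding Dr_def by blast
  have lin: "lf a' b' c' (p t) = lf a' b' c' (p 0) + t * Dr" for t
    by (simp add: p_def lf_def Dr_def algebra_simps)
  have "lf a' b' c' (p (1 / (2 * Dr))) - lf a' b' c' (p 0) \<in> \<int>" by (rule Ints_diff[OF int int])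
  moreover have "lf a' b' c' (p (1 / (2 * Dr))) - lf a' b' c' (p 0) = 1/2" using lin[of "1 / (2 * Dr)"] Dr by simp
  ultimately show False using half_not_int by simp
qed

lemma prim_par:
  fixes a b a' b' :: int
  assumes "coprime a b" "coprime a' b'" "a * b' - a' * b = 0"
  shows "(a' = a \<and> b' = b) \<or> (a' = - a \<and> b' = - b)"
proof -
  have e: "a * b' = a' * b" using assms(3) by simp
  have "a dvd a' * b" using e by (metis dvd_triv_left)
  then have d1: "a dvd a'" using assms(1) coprime_dvd_mult_left_iff by blast
  have "a' dvd a * b'" using e by (metis dvd_triv_left)
  then have d2: "a' dvd a" using assms(2) coprime_dvd_mult_left_iff by blast
  have e2: "b' * a = a' * b" using e by (simp add: mult.commute)
  have "b dvd b' * a" unfolding e2 by simp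
  moreover have "coprime b a" using assms(1) by (simp add: coprime_commute)
  ultimately have d3: "b dvd b'" using coprime_dvd_mult_left_iff[of b a b'] by simp
  have e3: "b * a' = a * b'" using e by (simp add: mult.commute)
  have "b' dvd b * a'" unfolding e3 by simp
  moreover have "coprime b' a'" using assms(2) by (simp add: coprime_commute)
  ultimately have d4: "b' dvd b" using coprime_dvd_mult_left_iff[of b' a' b] by simp
  have aa: "\<bar>a\<bar> = \<bar>a'\<bar>" by (rule zdvd_antisym_abs[OF d1 d2])
  have bb: "\<bar>b\<bar> = \<bar>b'\<bar>" by (rule zdvd_antisym_abs[OF d3 d4])
  show ?thesis
  proof (cases "a = 0")
    case True
    then have "a' = 0" using aa by simp
    moreover have "b' = b \<or> b' = - b" using bb by (auto simp: abs_eq_iff)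
    ultimately show ?thesis using True by auto
  next
    case False
    have "a' = a \<or> a' = - a" using aa by (auto simp: abs_eq_iff)
    then show ?thesis
    proof
      assume "a' = a"
      then have "b' = b" using e False by simp
      then show ?thesis using \<open>a' = a\<close> by simp
    next
      assume "a' = - a"
      then have "a * b' = a * (- b)" using e by simp
      then have "b' = - b" using False by (simp only: mult_cancel_left) simp
      then show ?thesis using \<open>a' = - a\<close> by simp
    qed
  qed
qed

lemma Collect_insert3: "{l \<in> insert a B. P l} = (if P a then insert a {l \<in> B. P l} else {l \<in> B. P l})"
  by auto

lemma vert3:
  assumes "X \<noteq> Y" "X \<noteq> Z" "Y \<noteq> Z" "X \<subseteq> torus" "Y \<subseteq> torus" "Z \<subseteq> torus"
  shows "arr_vertices {X, Y, Z} = (X \<inter> Y) \<union> (X \<inter> Z) \<union> (Y \<inter> Z)"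
proof -
  have "2 \<le> card {l \<in> {X, Y, Z}. p \<in> l} \<longleftrightarrow> p \<in> (X \<inter> Y) \<union> (X \<inter> Z) \<union> (Y \<inter> Z)" for p
  proof -
    have E: "{l \<in> {X, Y, Z}. p \<in> l} = (if p \<in> X then {X} else {}) \<union> (if p \<in> Y then {Y} else {}) \<union> (if p \<in> Z then {Z} else {})"
      by auto
    show ?thesis unfolding E using assms(1-3)
      by (cases "p \<in> X"; cases "p \<in> Y"; cases "p \<in> Z"; simp add: card_insert_if)
  qed
  then show ?thesis using assms(4-6) by (auto simp: arr_vertices_def)
qed

lemma tl_torus: "tl a b c \<subseteq> torus" by (auto simp: tl_def torus_def)

context cons begin

lemma construction: "\<exists>A. toric_arrangement A \<and> card A = 3 \<and> card (arr_vertices A) = n \<and> card (arr_chambers A) = 2 * n"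
proof -
  have np: "real n \<noteq> 0" using npos by simp
  define q where "q = torus_map (1 / (2 * real n), 0)"
  define q' where "q' = torus_map (0, 1/2 :: real)"
  have q1: "q \<in> T.L1" unfolding q_def using mem_tl[OF T.cop1] by (simp add: l_simps)
  have q2: "q \<notin> T.L2" unfolding q_def using mem_tl[OF T.cop2] half_not_int np by (simp add: l_simps)
  have q3: "q \<notin> T.L3" unfolding q_def using mem_tl[OF T.cop3] half_not_int np by (simp add: l_simps)
  have q'2: "q' \<notin> T.L2" unfolding q'_def using mem_tl[OF T.cop2] half_not_int by (simp add: l_simps)
  have q'3: "q' \<in> T.L3" unfolding q'_def using mem_tl[OF T.cop3] by (simp add: l_simps)
  have d12: "T.L1 \<noteq> T.L2" using q1 q2 by blast
  have d13: "T.L1 \<noteq> T.L3" using q1 q3 by blast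
  have d23: "T.L2 \<noteq> T.L3" using q'2 q'3 by blast
  define A where "A = {T.L1, T.L2, T.L3}"
  have cA: "card A = 3" using d12 d13 d23 by (simp add: A_def)
  have tl: "\<forall>l\<in>A. toric_line l"
    using tl_type T.cop1 T.cop2 T.cop3 unfolding A_def toric_line_def by blast
  have ess: "\<not> (\<exists>a b. \<forall>l\<in>A. toric_line_of_type l a b)"
  proof
    assume "\<exists>a b. \<forall>l\<in>A. toric_line_of_type l a b"
    then obtain a b where ab: "toric_line_of_type T.L1 a b" "toric_line_of_type T.L2 a b" by (auto simp: A_def)
    have "0 * b - a * 1 = 0" by (rule type_det[OF ab(1) T.cop1])
    then have a0: "a = 0" by simp
    have "int n * b - a * 1 = 0" by (rule type_det[OF ab(2) T.cop2])
    then have "b = 0" using a0 npos by simp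
    then show False using a0 type_tl[OF ab(1)] by simp
  qed
  have ta: "toric_arrangement A" using tl ess by (simp add: toric_arrangement_def A_def)
  have "arr_vertices A = W"
    unfolding A_def by (subst vert3) (use d12 d13 d23 tl_torus V_eq in auto)
  then have cv: "card (arr_vertices A) = n" by (simp add: W_card)
  have "\<Union> A = T.L1 \<union> T.L2 \<union> T.L3" by (auto simp: A_def)
  then have "arr_chambers A = components SS" by (simp add: arr_chambers_def)
  then have cc: "card (arr_chambers A) = 2 * n" using comps_upper comps_lower by simp
  show ?thesis using ta cA cv cc by blast
qed

end

theorem mainTheorem8:
  fixes f0 :: nat
  assumes "0 < f0"
  shows "(\<exists>A. toric_arrangement A \<and> card A = 3 \<and> card (arr_vertices A) = f0
             \<and> card (arr_chambers A) = 2 * f0) \<longleftrightarrow> odd f0"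
proof
  assume "odd f0"
  then interpret C: cons f0 by unfold_locales
  show "\<exists>A. toric_arrangement A \<and> card A = 3 \<and> card (arr_vertices A) = f0 \<and> card (arr_chambers A) = 2 * f0"
    by (rule C.construction)
next
  assume "\<exists>A. toric_arrangement A \<and> card A = 3 \<and> card (arr_vertices A) = f0 \<and> card (arr_chambers A) = 2 * f0"
  then obtain A where ta: "toric_arrangement A" and cA: "card A = 3" and cv: "card (arr_vertices A) = f0"
    and cc: "card (arr_chambers A) = 2 * f0" by blast
  obtain X Y Z where A: "A = {X, Y, Z}" and dXY: "X \<noteq> Y" and dYZ: "Y \<noteq> Z" and dXZ: "X \<noteq> Z"
    using cA card_3_iff by metis
  have tls: "toric_line X" "toric_line Y" "toric_line Z" using ta by (auto simp: toric_arrangement_def A)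
  obtain a1 b1 c1 where c1: "coprime a1 b1" "X = tl a1 b1 c1"
    using tls(1) type_tl unfolding toric_line_def by metis
  obtain a2 b2 c2 where c2: "coprime a2 b2" "Y = tl a2 b2 c2"
    using tls(2) type_tl unfolding toric_line_def by metis
  obtain a3 b3 c3 where c3: "coprime a3 b3" "Z = tl a3 b3 c3"
    using tls(3) type_tl unfolding toric_line_def by metis
  have ess: "\<not> (\<exists>a b. \<forall>l\<in>A. toric_line_of_type l a b)" using ta by (simp add: toric_arrangement_def)
  have typ1: "toric_line_of_type (tl a' b' c) a1 b1" if "coprime a' b'" "a1 * b' - a' * b1 = 0" for a' b' c
  proof -
    have "(a' = a1 \<and> b' = b1) \<or> (a' = - a1 \<and> b' = - b1)" by (rule prim_par[OF c1(1) that])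
    then show ?thesis
    proof
      assume "a' = a1 \<and> b' = b1" then show ?thesis using tl_type[OF c1(1)] by simp
    next
      assume "a' = - a1 \<and> b' = - b1" then show ?thesis using tl_type[OF c1(1)] by (simp add: tl_neg)
    qed
  qed
  have Dor: "a1 * b2 - a2 * b1 \<noteq> 0 \<or> a1 * b3 - a3 * b1 \<noteq> 0"
  proof (rule ccontr)
    assume "\<not> (a1 * b2 - a2 * b1 \<noteq> 0 \<or> a1 * b3 - a3 * b1 \<noteq> 0)"
    then have z: "a1 * b2 - a2 * b1 = 0" "a1 * b3 - a3 * b1 = 0" by auto
    have "\<forall>l\<in>A. toric_line_of_type l a1 b1"
      using typ1[OF c2(1) z(1)] typ1[OF c3(1) z(2)] tl_type[OF c1(1)] c1(2) c2(2) c3(2) by (auto simp: A)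
    then show False using ess by blast
  qed
  have V: "arr_vertices A = (X \<inter> Y) \<union> (X \<inter> Z) \<union> (Y \<inter> Z)"
    unfolding A by (rule vert3) (use dXY dYZ dXZ c1 c2 c3 tl_torus in auto)
  have UA: "\<Union> A = X \<union> Y \<union> Z" by (auto simp: A)
  show "odd f0"
  proof (cases "a1 * b2 - a2 * b1 \<noteq> 0")
    case True
    have th: "three a1 b1 a2 b2 a3 b3" using True c1 c2 c3 by (intro three.intro) auto
    show ?thesis
    proof (rule three.core_odd[OF th])
      show "card (tl a1 b1 c1 \<inter> tl a2 b2 c2 \<union> tl a1 b1 c1 \<inter> tl a3 b3 c3 \<union> tl a2 b2 c2 \<inter> tl a3 b3 c3) = f0"
        using cv V c1 c2 c3 by simp
      show "0 < f0" by (rule assms)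
      show "card (components (torus - (tl a1 b1 c1 \<union> tl a2 b2 c2 \<union> tl a3 b3 c3))) = 2 * f0"
        using cc UA c1 c2 c3 by (simp add: arr_chambers_def)
    qed
  next
    case False
    then have D13: "a1 * b3 - a3 * b1 \<noteq> 0" using Dor by blast
    have th: "three a1 b1 a3 b3 a2 b2" using D13 c1 c2 c3 by (intro three.intro) auto
    show ?thesis
    proof (rule three.core_odd[OF th])
      have "X \<inter> Z \<union> X \<inter> Y \<union> Z \<inter> Y = (X \<inter> Y) \<union> (X \<inter> Z) \<union> (Y \<inter> Z)" by blast
      then show "card (tl a1 b1 c1 \<inter> tl a3 b3 c3 \<union> tl a1 b1 c1 \<inter> tl a2 b2 c2 \<union> tl a3 b3 c3 \<inter> tl a2 b2 c2) = f0"
        using cv V c1 c2 c3 by simp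
      show "0 < f0" by (rule assms)
      have "X \<union> Z \<union> Y = X \<union> Y \<union> Z" by blast
      then show "card (components (torus - (tl a1 b1 c1 \<union> tl a3 b3 c3 \<union> tl a2 b2 c2))) = 2 * f0"
        using cc UA c1 c2 c3 by (simp add: arr_chambers_def)
    qed
  qed
qed

end
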